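(* Suppose $k$ is a finite field with the trivial absolute value or a local field, and let $X$ be a topological space. For every maximal ideal $m$ of $C_{bd}(X,k)$ the quotient $C_{bd}(X,k)/m$ is $k$, and denoting by $f(m)\in k$ the image of $f$, one has $C_{bd}(X,k)=k\oplus m$ orthogonally and $$\|f\|=\sup_{m\in\mathrm{Max}(C_{bd}(X,k))}|f(m)|\quad\text{for all } f\in C_{bd}(X,k).$$
   Context: A local field means a complete discretely valued field with finite residue field. $C_{bd}(X,k)$ is the $k$-algebra of bounded continuous functions $X\to k$ with the supremum norm $\|f\|=\sup_{x\in X}|f(x)|$; $\mathrm{Max}$ denotes the set of maximal ideals. Orthogonal means $\|a+g\|=\max\{|a|,\|g\|\}$ for $a\in k$, $g\in m$. *)

theory Defs
  imports "HOL-Analysis.Analysis" "HOL-Algebra.QuotRing"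
begin

definition is_absval :: "('k::field \<Rightarrow> real) \<Rightarrow> bool" where
  "is_absval v \<longleftrightarrow> (\<forall>x. 0 \<le> v x) \<and> (\<forall>x. v x = 0 \<longleftrightarrow> x = 0) \<and>
     (\<forall>x y. v (x * y) = v x * v y) \<and> (\<forall>x y. v (x + y) \<le> v x + v y)"

definition trivial_absval :: "('k::field \<Rightarrow> real) \<Rightarrow> bool" where
  "trivial_absval v \<longleftrightarrow> (\<forall>x. v x = (if x = 0 then 0 else 1))"

text \<open>Complete discretely valued field with finite residue field.\<close>
definition local_field :: "('k::field \<Rightarrow> real) \<Rightarrow> bool" where
  "local_field v \<longleftrightarrow> is_absval v
     \<and> (\<forall>x y. v (x + y) \<le> max (v x) (v y))
     \<and> (\<exists>\<pi>. 0 < v \<pi> \<and> v \<pi> < 1 \<and> (\<forall>x. x \<noteq> 0 \<longrightarrow> (\<exists>n::int. v x = v \<pi> powi n)))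
     \<and> (\<forall>s::nat \<Rightarrow> 'k. (\<forall>e>0. \<exists>N. \<forall>m\<ge>N. \<forall>n\<ge>N. v (s m - s n) < e)
           \<longrightarrow> (\<exists>l. \<forall>e>0. \<exists>N. \<forall>n\<ge>N. v (s n - l) < e))
     \<and> finite ({x. v x \<le> 1} // {(x, y). v x \<le> 1 \<and> v y \<le> 1 \<and> v (x - y) < 1})"

definition absval_topology :: "('k::field \<Rightarrow> real) \<Rightarrow> 'k topology" where
  "absval_topology v = topology (\<lambda>U. \<forall>x\<in>U. \<exists>e>0. \<forall>y. v (y - x) < e \<longrightarrow> y \<in> U)"

text \<open>Bounded continuous functions X \<rightarrow> k (extended by 0 outside topspace X).\<close>
definition Cbd_set :: "'x topology \<Rightarrow> ('k::field \<Rightarrow> real) \<Rightarrow> ('x \<Rightarrow> 'k) set" where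
  "Cbd_set X v = {f. continuous_map X (absval_topology v) f
      \<and> (\<exists>B. \<forall>x\<in>topspace X. v (f x) \<le> B)
      \<and> (\<forall>x. x \<notin> topspace X \<longrightarrow> f x = 0)}"

definition cst :: "'x topology \<Rightarrow> 'k::field \<Rightarrow> 'x \<Rightarrow> 'k" where
  "cst X a = (\<lambda>x. if x \<in> topspace X then a else 0)"

definition Cbd :: "'x topology \<Rightarrow> ('k::field \<Rightarrow> real) \<Rightarrow> ('x \<Rightarrow> 'k) ring" where
  "Cbd X v = \<lparr>carrier = Cbd_set X v,
      mult = (\<lambda>f g x. f x * g x), one = cst X 1,
      zero = (\<lambda>x. 0), add = (\<lambda>f g x. f x + g x)\<rparr>"

definition sup0 :: "real set \<Rightarrow> real" where
  "sup0 S = (if S = {} then 0 else Sup S)"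

definition sup_norm :: "'x topology \<Rightarrow> ('k::field \<Rightarrow> real) \<Rightarrow> ('x \<Rightarrow> 'k) \<Rightarrow> real" where
  "sup_norm X v f = sup0 ((\<lambda>x. v (f x)) ` topspace X)"

text \<open>The image f(m) \<in> k of f in C_bd(X,k)/m \<cong> k.\<close>
definition eval_max :: "'x topology \<Rightarrow> ('k::field \<Rightarrow> real) \<Rightarrow> ('x \<Rightarrow> 'k) set \<Rightarrow> ('x \<Rightarrow> 'k) \<Rightarrow> 'k" where
  "eval_max X v m f = (THE a. m +>\<^bsub>Cbd X v\<^esub> cst X a = m +>\<^bsub>Cbd X v\<^esub> f)"

end

theory Submission
  imports Defs
begin


section \<open>Absolute values\<close>

lemma av0: "is_absval v \<Longrightarrow> v 0 = 0" by (simp add: is_absval_def)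
lemma av_ge0: "is_absval v \<Longrightarrow> 0 \<le> v x" by (simp add: is_absval_def)
lemma av_eq0: "is_absval v \<Longrightarrow> v x = 0 \<longleftrightarrow> x = 0" by (simp add: is_absval_def)
lemma av_mult: "is_absval v \<Longrightarrow> v (x * y) = v x * v y" by (simp add: is_absval_def)
lemma av_tri: "is_absval v \<Longrightarrow> v (x + y) \<le> v x + v y" by (simp add: is_absval_def)

lemma av1: assumes "is_absval v" shows "v 1 = 1"
proof -
  have "v 1 = v 1 * v 1" using av_mult[OF assms, of 1 1] by simp
  moreover have "v 1 \<noteq> 0" using av_eq0[OF assms, of 1] by simp
  ultimately show ?thesis by (metis mult_cancel_left1)
qed

lemma av_neg: assumes "is_absval v" shows "v (- x) = v x"
proof -
  have "v (-1) * v (-1) = 1" using av_mult[OF assms, of "-1" "-1"] av1[OF assms] by simp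
  moreover have "v (-1) \<ge> 0" using av_ge0[OF assms] .
  ultimately have "v (-1) = 1"
    by (smt (verit) mult_le_one mult_less_cancel_left1)
  then show ?thesis using av_mult[OF assms, of "-1" x] by simp
qed

lemma av_sym: assumes "is_absval v" shows "v (x - y) = v (y - x)"
  using av_neg[OF assms, of "x - y"] by simp

lemma av_inv: assumes "is_absval v" shows "v (inverse x) = inverse (v x)"
proof (cases "x = 0")
  case True then show ?thesis using av0[OF assms] by simp
next
  case False
  have "v (inverse x) * v x = 1" using av_mult[OF assms, of "inverse x" x] av1[OF assms] False by simp
  moreover have "v x \<noteq> 0" using av_eq0[OF assms, of x] False by simp
  ultimately show ?thesis by (simp add: field_simps)
qed

lemma av_pow: assumes "is_absval v" shows "v (x ^ n) = v x ^ n"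
  by (induction n) (simp_all add: av1[OF assms] av_mult[OF assms])

lemma av_diff_tri: assumes "is_absval v" shows "v (x - z) \<le> v (x - y) + v (y - z)"
  using av_tri[OF assms, of "x - y" "y - z"] by simp

section \<open>Topology\<close>

lemma istop_absval: 
  shows "istopology (\<lambda>U. \<forall>x\<in>U. \<exists>e>0. \<forall>y. (v::'a::field\<Rightarrow>real) (y - x) < e \<longrightarrow> y \<in> U)"
  unfolding istopology_def
proof (intro conjI allI impI)
  fix S T :: "'a set"
  assume S: "\<forall>x\<in>S. \<exists>e>0. \<forall>y. v (y - x) < e \<longrightarrow> y \<in> S"
     and T: "\<forall>x\<in>T. \<exists>e>0. \<forall>y. v (y - x) < e \<longrightarrow> y \<in> T"
  show "\<forall>x\<in>S \<inter> T. \<exists>e>0. \<forall>y. v (y - x) < e \<longrightarrow> y \<in> S \<inter> T"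
  proof
    fix x assume x: "x \<in> S \<inter> T"
    obtain e1 where "e1 > 0" "\<forall>y. v (y - x) < e1 \<longrightarrow> y \<in> S" using S x by auto
    obtain e2 where "e2 > 0" "\<forall>y. v (y - x) < e2 \<longrightarrow> y \<in> T" using T x by auto
    then have "min e1 e2 > 0 \<and> (\<forall>y. v (y - x) < min e1 e2 \<longrightarrow> y \<in> S \<inter> T)" using \<open>e1>0\<close> \<open>\<forall>y. v (y - x) < e1 \<longrightarrow> y \<in> S\<close> by auto
    then show "\<exists>e>0. \<forall>y. v (y - x) < e \<longrightarrow> y \<in> S \<inter> T" by blast
  qed
next
  fix K :: "'a set set"
  assume "\<forall>U\<in>K. \<forall>x\<in>U. \<exists>e>0. \<forall>y. v (y - x) < e \<longrightarrow> y \<in> U"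
  then show "\<forall>x\<in>\<Union>K. \<exists>e>0. \<forall>y. v (y - x) < e \<longrightarrow> y \<in> \<Union>K" by (meson UnionE UnionI)
qed

lemma openin_absval: assumes "is_absval v"
  shows "openin (absval_topology v) U \<longleftrightarrow> (\<forall>x\<in>U. \<exists>e>0. \<forall>y. v (y - x) < e \<longrightarrow> y \<in> U)"
  unfolding absval_topology_def using istop_absval[of v] by simp

lemma topspace_absval: assumes "is_absval v" shows "topspace (absval_topology v) = UNIV"
proof -
  have "\<exists>e>0. \<forall>y. v (y - x) < e \<longrightarrow> y \<in> UNIV" for x
    by (rule exI[of _ "1::real"]) simp
  then have "openin (absval_topology v) UNIV" using openin_absval[OF assms] by blast
  then show ?thesis using openin_subset by blast
qed

definition cont :: "'x topology \<Rightarrow> ('k::field \<Rightarrow> real) \<Rightarrow> ('x \<Rightarrow> 'k) \<Rightarrow> bool" where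
  "cont X v f \<longleftrightarrow> (\<forall>x\<in>topspace X. \<forall>e>0. \<exists>W. openin X W \<and> x \<in> W \<and> (\<forall>y\<in>W. v (f y - f x) < e))"

lemma cont_iff: assumes av: "is_absval v"
  shows "continuous_map X (absval_topology v) f \<longleftrightarrow> cont X v f"
proof
  assume c: "continuous_map X (absval_topology v) f"
  show "cont X v f" unfolding cont_def
  proof (intro ballI allI impI)
    fix x e assume x: "x \<in> topspace X" and e: "(e::real) > 0"
    let ?B = "{y. v (y - f x) < e}"
    have "openin (absval_topology v) ?B" unfolding openin_absval[OF av]
    proof
      fix y assume "y \<in> ?B"
      then have "v (y - f x) < e" by simp
      moreover have "\<forall>z. v (z - y) < e - v (y - f x) \<longrightarrow> z \<in> ?B"
      proof (intro allI impI)
        fix z assume "v (z - y) < e - v (y - f x)"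
        then show "z \<in> ?B" using av_diff_tri[OF av, of z "f x" y] by simp
      qed
      ultimately show "\<exists>d>0. \<forall>z. v (z - y) < d \<longrightarrow> z \<in> ?B"
        by (intro exI[of _ "e - v (y - f x)"]) auto
    qed
    then have "openin X {y \<in> topspace X. f y \<in> ?B}" by (rule openin_continuous_map_preimage[OF c])
    moreover have "x \<in> {y \<in> topspace X. f y \<in> ?B}" using x e av0[OF av] by simp
    ultimately show "\<exists>W. openin X W \<and> x \<in> W \<and> (\<forall>y\<in>W. v (f y - f x) < e)" by blast
  qed
next
  assume c: "cont X v f"
  show "continuous_map X (absval_topology v) f" unfolding continuous_map topspace_absval[OF av]
  proof (intro conjI allI impI)
    show "f ` topspace X \<subseteq> UNIV" by simp
    fix U assume U: "openin (absval_topology v) U"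
    show "openin X {x \<in> topspace X. f x \<in> U}"
      unfolding openin_subopen[of X "{x \<in> topspace X. f x \<in> U}"]
    proof
      fix x assume x: "x \<in> {x \<in> topspace X. f x \<in> U}"
      have Uo: "\<forall>x\<in>U. \<exists>e>0. \<forall>y. v (y - x) < e \<longrightarrow> y \<in> U"
        using U openin_absval[OF av] by simp
      have "f x \<in> U" using x by simp
      from bspec[OF Uo this] obtain e where e: "e > 0" "\<forall>y. v (y - f x) < e \<longrightarrow> y \<in> U"
        by blast
      have c': "\<forall>x\<in>topspace X. \<forall>e>0. \<exists>W. openin X W \<and> x \<in> W \<and> (\<forall>y\<in>W. v (f y - f x) < e)"
        using c unfolding cont_def .
      have "x \<in> topspace X" using x by simp
      from bspec[OF c' this] e(1) obtain W where W: "openin X W" "x \<in> W" "\<forall>y\<in>W. v (f y - f x) < e"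
        by blast
      have "W \<subseteq> topspace X" using W(1) by (rule openin_subset)
      then have "W \<subseteq> {x \<in> topspace X. f x \<in> U}" using e(2) W(3) by blast
      then show "\<exists>T. openin X T \<and> x \<in> T \<and> T \<subseteq> {x \<in> topspace X. f x \<in> U}" using W by blast
    qed
  qed
qed


lemma bnd_pos: assumes "\<exists>B. \<forall>x\<in>S. v (f x) \<le> (B::real)" shows "\<exists>B>0. \<forall>x\<in>S. v (f x) \<le> B"
proof -
  obtain B where "\<forall>x\<in>S. v (f x) \<le> B" using assms by blast
  then have "max B 1 > 0 \<and> (\<forall>x\<in>S. v (f x) \<le> max B 1)" by auto
  then show ?thesis by blast
qed

lemma carrier_Cbd: assumes av: "is_absval v"
  shows "f \<in> carrier (Cbd X v) \<longleftrightarrow> cont X v f \<and> (\<exists>B. \<forall>x\<in>topspace X. v (f x) \<le> B) \<and> (\<forall>x. x \<notin> topspace X \<longrightarrow> f x = 0)"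
  by (simp add: Cbd_def Cbd_set_def cont_iff[OF av])

lemma Cbd_add[simp]: "f \<oplus>\<^bsub>Cbd X v\<^esub> g = (\<lambda>x. f x + g x)" by (simp add: Cbd_def)
lemma Cbd_mult[simp]: "f \<otimes>\<^bsub>Cbd X v\<^esub> g = (\<lambda>x. f x * g x)" by (simp add: Cbd_def)
lemma Cbd_one[simp]: "\<one>\<^bsub>Cbd X v\<^esub> = cst X 1" by (simp add: Cbd_def)
lemma Cbd_zero[simp]: "\<zero>\<^bsub>Cbd X v\<^esub> = (\<lambda>x. 0)" by (simp add: Cbd_def)

lemma cont_locconst:
  assumes "\<And>x. x \<in> topspace X \<Longrightarrow> \<exists>W. openin X W \<and> x \<in> W \<and> (\<forall>y\<in>W. f y = f x)"
    and av: "is_absval v"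
  shows "cont X v f"
  unfolding cont_def
proof (intro ballI allI impI)
  fix x e assume "x \<in> topspace X" "(e::real) > 0"
  then obtain W where W: "openin X W" "x \<in> W" "\<forall>y\<in>W. f y = f x" using assms(1) by blast
  have "\<forall>y\<in>W. v (f y - f x) < e" using W(3) av0[OF av] \<open>e > 0\<close> by force
  then show "\<exists>W. openin X W \<and> x \<in> W \<and> (\<forall>y\<in>W. v (f y - f x) < e)"
    using W(1,2) by (intro exI[of _ W]) simp
qed

lemma cont_cst: assumes av: "is_absval v" shows "cont X v (cst X c)"
proof (rule cont_locconst[OF _ av])
  fix x assume x: "x \<in> topspace X"
  then show "\<exists>W. openin X W \<and> x \<in> W \<and> (\<forall>y\<in>W. cst X c y = cst X c x)"
    by (intro exI[of _ "topspace X"]) (simp add: cst_def)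
qed

lemma cont_add: assumes av: "is_absval v" and f: "cont X v f" and g: "cont X v g"
  shows "cont X v (\<lambda>x. f x + g x)"
  unfolding cont_def
proof (intro ballI allI impI)
  fix x e assume x: "x \<in> topspace X" and e: "(e::real) > 0"
  have f': "\<forall>e>0. \<exists>W. openin X W \<and> x \<in> W \<and> (\<forall>y\<in>W. v (f y - f x) < e)"
    using f x unfolding cont_def by simp
  have g': "\<forall>e>0. \<exists>W. openin X W \<and> x \<in> W \<and> (\<forall>y\<in>W. v (g y - g x) < e)"
    using g x unfolding cont_def by simp
  have "e/2 > 0" using e by simp
  then obtain W1 where W1: "openin X W1" "x \<in> W1" "\<forall>y\<in>W1. v (f y - f x) < e/2"
    using f' by blast
  obtain W2 where W2: "openin X W2" "x \<in> W2" "\<forall>y\<in>W2. v (g y - g x) < e/2"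
    using g' \<open>e/2 > 0\<close> by blast
  have "\<forall>y\<in>W1 \<inter> W2. v ((f y + g y) - (f x + g x)) < e"
  proof
    fix y assume y: "y \<in> W1 \<inter> W2"
    have "(f y + g y) - (f x + g x) = (f y - f x) + (g y - g x)" by simp
    then have "v ((f y + g y) - (f x + g x)) \<le> v (f y - f x) + v (g y - g x)"
      using av_tri[OF av] by metis
    moreover have "v (f y - f x) < e/2" using W1(3) y by blast
    moreover have "v (g y - g x) < e/2" using W2(3) y by blast
    ultimately show "v ((f y + g y) - (f x + g x)) < e" by linarith
  qed
  moreover have "openin X (W1 \<inter> W2)" using W1(1) W2(1) by (rule openin_Int)
  moreover have "x \<in> W1 \<inter> W2" using W1(2) W2(2) by simp
  ultimately show "\<exists>W. openin X W \<and> x \<in> W \<and> (\<forall>y\<in>W. v ((f y + g y) - (f x + g x)) < e)"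
    by (intro exI[of _ "W1 \<inter> W2"]) simp
qed

lemma cont_neg: assumes av: "is_absval v" and f: "cont X v f"
  shows "cont X v (\<lambda>x. - f x)"
proof -
  have "v (- f y - - f x) = v (f y - f x)" for x y
    using av_neg[OF av, of "f y - f x"] by simp
  then show ?thesis using f unfolding cont_def by simp
qed

lemma cont_mult: assumes av: "is_absval v" and f: "cont X v f" and g: "cont X v g"
  and B: "B > 0" and fB: "\<forall>x\<in>topspace X. v (f x) \<le> B" and gB: "\<forall>x\<in>topspace X. v (g x) \<le> B"
  shows "cont X v (\<lambda>x. f x * g x)"
  unfolding cont_def
proof (intro ballI allI impI)
  fix x e assume x: "x \<in> topspace X" and e: "(e::real) > 0"
  have f': "\<forall>e>0. \<exists>W. openin X W \<and> x \<in> W \<and> (\<forall>y\<in>W. v (f y - f x) < e)"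
    using f x unfolding cont_def by simp
  have g': "\<forall>e>0. \<exists>W. openin X W \<and> x \<in> W \<and> (\<forall>y\<in>W. v (g y - g x) < e)"
    using g x unfolding cont_def by simp
  have "e/(2*B) > 0" using e B by simp
  then obtain W1 where W1: "openin X W1" "x \<in> W1" "\<forall>y\<in>W1. v (f y - f x) < e/(2*B)"
    using f' by blast
  obtain W2 where W2: "openin X W2" "x \<in> W2" "\<forall>y\<in>W2. v (g y - g x) < e/(2*B)"
    using g' \<open>e/(2*B) > 0\<close> by blast
  have "\<forall>y\<in>W1 \<inter> W2. v (f y * g y - f x * g x) < e"
  proof
    fix y assume y: "y \<in> W1 \<inter> W2"
    then have yX: "y \<in> topspace X" using W1(1) openin_subset by blast
    have "f y * g y - f x * g x = f y * (g y - g x) + (f y - f x) * g x" by (simp add: algebra_simps)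
    then have "v (f y * g y - f x * g x) \<le> v (f y) * v (g y - g x) + v (f y - f x) * v (g x)"
      using av_tri[OF av] av_mult[OF av] by metis
    also have "\<dots> \<le> B * v (g y - g x) + v (f y - f x) * B"
      using fB gB x yX av_ge0[OF av] B by (intro add_mono mult_mono) auto
    also have "\<dots> < B * (e/(2*B)) + (e/(2*B)) * B"
    proof -
      have a: "v (g y - g x) < e/(2*B)" using W2(3) y by blast
      have b: "v (f y - f x) < e/(2*B)" using W1(3) y by blast
      show ?thesis using mult_strict_left_mono[OF a B] mult_strict_right_mono[OF b B] by linarith
    qed
    also have "\<dots> = e" using B by (simp add: field_simps)
    finally show "v (f y * g y - f x * g x) < e" .
  qed
  moreover have "openin X (W1 \<inter> W2)" using W1(1) W2(1) by (rule openin_Int)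
  moreover have "x \<in> W1 \<inter> W2" using W1(2) W2(2) by simp
  ultimately show "\<exists>W. openin X W \<and> x \<in> W \<and> (\<forall>y\<in>W. v (f y * g y - f x * g x) < e)"
    by (intro exI[of _ "W1 \<inter> W2"]) simp
qed

lemma cont_inv: assumes av: "is_absval v" and h: "cont X v h"
  and d: "d > 0" and hd: "\<forall>x\<in>topspace X. d \<le> v (h x)"
  shows "cont X v (\<lambda>x. if x \<in> topspace X then inverse (h x) else 0)"
  unfolding cont_def
proof (intro ballI allI impI)
  fix x e assume x: "x \<in> topspace X" and e: "(e::real) > 0"
  have h': "\<forall>e>0. \<exists>W. openin X W \<and> x \<in> W \<and> (\<forall>y\<in>W. v (h y - h x) < e)"
    using h x unfolding cont_def by simp
  have "e * (d * d) > 0" using e d by simp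
  then obtain W where W: "openin X W" "x \<in> W" "\<forall>y\<in>W. v (h y - h x) < e * (d * d)"
    using h' by blast
  have "\<forall>y\<in>W. v ((if y \<in> topspace X then inverse (h y) else 0) - (if x \<in> topspace X then inverse (h x) else 0)) < e"
  proof
    fix y assume y: "y \<in> W"
    then have yX: "y \<in> topspace X" using W(1) openin_subset by blast
    have hy: "d \<le> v (h y)" and hx: "d \<le> v (h x)" using hd x yX by auto
    then have "h y \<noteq> 0" "h x \<noteq> 0" using d av0[OF av] by auto
    then have "inverse (h y) - inverse (h x) = - (inverse (h y) * (h y - h x) * inverse (h x))"
      by (rule inverse_diff_inverse)
    then have "v (inverse (h y) - inverse (h x)) = inverse (v (h y)) * v (h y - h x) * inverse (v (h x))"
      by (simp only: av_neg[OF av] av_mult[OF av] av_inv[OF av])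
    also have "\<dots> = v (h y - h x) / (v (h y) * v (h x))"
      using hy hx d by (simp add: field_simps)
    also have "\<dots> \<le> v (h y - h x) / (d * d)"
      using hy hx d av_ge0[OF av] by (intro divide_left_mono mult_mono) auto
    also have "\<dots> < e" using W(3) y d by (simp add: field_simps)
    finally show "v ((if y \<in> topspace X then inverse (h y) else 0) - (if x \<in> topspace X then inverse (h x) else 0)) < e"
      using x yX by simp
  qed
  then show "\<exists>W. openin X W \<and> x \<in> W \<and> (\<forall>y\<in>W. v ((if y \<in> topspace X then inverse (h y) else 0) - (if x \<in> topspace X then inverse (h x) else 0)) < e)"
    using W by (intro exI[of _ W]) simp
qed


context
  fixes X :: "'x topology" and v :: "'k::field \<Rightarrow> real"
  assumes av: "is_absval v"
begin

lemma C_vanish: "f \<in> carrier (Cbd X v) \<Longrightarrow> x \<notin> topspace X \<Longrightarrow> f x = 0"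
  using carrier_Cbd[OF av, of f X] by simp

lemma C_cont: "f \<in> carrier (Cbd X v) \<Longrightarrow> cont X v f"
  using carrier_Cbd[OF av, of f X] by simp

lemma C_bnd: "f \<in> carrier (Cbd X v) \<Longrightarrow> \<exists>B>0. \<forall>x\<in>topspace X. v (f x) \<le> B"
proof -
  assume "f \<in> carrier (Cbd X v)"
  then have "\<exists>B. \<forall>x\<in>topspace X. v (f x) \<le> B" using carrier_Cbd[OF av, of f X] by simp
  then show ?thesis by (rule bnd_pos)
qed

lemma C_intro: "cont X v f \<Longrightarrow> \<forall>x\<in>topspace X. v (f x) \<le> B \<Longrightarrow> (\<And>x. x \<notin> topspace X \<Longrightarrow> f x = 0)
   \<Longrightarrow> f \<in> carrier (Cbd X v)"
  unfolding carrier_Cbd[OF av, of f X] by blast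

lemma C_add: assumes f: "f \<in> carrier (Cbd X v)" and g: "g \<in> carrier (Cbd X v)"
  shows "(\<lambda>x. f x + g x) \<in> carrier (Cbd X v)"
proof -
  obtain B1 where B1: "\<forall>x\<in>topspace X. v (f x) \<le> B1" using C_bnd[OF f] by blast
  obtain B2 where B2: "\<forall>x\<in>topspace X. v (g x) \<le> B2" using C_bnd[OF g] by blast
  have "\<forall>x\<in>topspace X. v (f x + g x) \<le> B1 + B2"
  proof
    fix x assume "x \<in> topspace X"
    then have "v (f x) \<le> B1" "v (g x) \<le> B2" using B1 B2 by auto
    then show "v (f x + g x) \<le> B1 + B2" using av_tri[OF av, of "f x" "g x"] by linarith
  qed
  then show ?thesis
    by (rule C_intro[OF cont_add[OF av C_cont[OF f] C_cont[OF g]]])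
       (simp add: C_vanish[OF f] C_vanish[OF g])
qed

lemma C_neg: assumes f: "f \<in> carrier (Cbd X v)"
  shows "(\<lambda>x. - f x) \<in> carrier (Cbd X v)"
proof -
  obtain B1 where B1: "\<forall>x\<in>topspace X. v (f x) \<le> B1" using C_bnd[OF f] by blast
  then have "\<forall>x\<in>topspace X. v (- f x) \<le> B1" using av_neg[OF av] by simp
  then show ?thesis
    by (rule C_intro[OF cont_neg[OF av C_cont[OF f]]]) (simp add: C_vanish[OF f])
qed

lemma C_mult: assumes f: "f \<in> carrier (Cbd X v)" and g: "g \<in> carrier (Cbd X v)"
  shows "(\<lambda>x. f x * g x) \<in> carrier (Cbd X v)"
proof -
  obtain B1 where B1: "B1 > 0" "\<forall>x\<in>topspace X. v (f x) \<le> B1" using C_bnd[OF f] by blast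
  obtain B2 where B2: "B2 > 0" "\<forall>x\<in>topspace X. v (g x) \<le> B2" using C_bnd[OF g] by blast
  have b1: "\<forall>x\<in>topspace X. v (f x) \<le> max B1 B2" using B1 by force
  have b2: "\<forall>x\<in>topspace X. v (g x) \<le> max B1 B2" using B2 by force
  have "\<forall>x\<in>topspace X. v (f x * g x) \<le> B1 * B2"
  proof
    fix x assume "x \<in> topspace X"
    then have "v (f x) \<le> B1" "v (g x) \<le> B2" using B1 B2 by auto
    then show "v (f x * g x) \<le> B1 * B2" using av_mult[OF av, of "f x" "g x"] av_ge0[OF av] B1(1)
      by (simp add: mult_mono)
  qed
  moreover have "max B1 B2 > 0" using B1 by simp
  ultimately show ?thesis
    by (intro C_intro[OF cont_mult[OF av C_cont[OF f] C_cont[OF g] _ b1 b2]]) (simp_all add: C_vanish[OF f])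
qed

lemma C_cst: "cst X c \<in> carrier (Cbd X v)"
proof -
  have "\<forall>x\<in>topspace X. v (cst X c x) \<le> v c" by (simp add: cst_def)
  then show ?thesis by (rule C_intro[OF cont_cst[OF av]]) (simp add: cst_def)
qed

lemma cst0: "cst X 0 = (\<lambda>x. 0)" by (simp add: cst_def fun_eq_iff)

lemma C_zero: "(\<lambda>x. 0) \<in> carrier (Cbd X v)"
proof -
  have "cst X 0 \<in> carrier (Cbd X v)" by (rule C_cst)
  then show ?thesis by (simp only: cst0)
qed

lemma C_inv: assumes h: "h \<in> carrier (Cbd X v)" and d: "d > 0" and hd: "\<forall>x\<in>topspace X. d \<le> v (h x)"
  shows "(\<lambda>x. if x \<in> topspace X then inverse (h x) else 0) \<in> carrier (Cbd X v)"
proof -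
  have "\<forall>x\<in>topspace X. v (if x \<in> topspace X then inverse (h x) else 0) \<le> inverse d"
  proof
    fix x assume x: "x \<in> topspace X"
    then have "d \<le> v (h x)" using hd by blast
    then have "inverse (v (h x)) \<le> inverse d" using d by (simp add: le_imp_inverse_le)
    then show "v (if x \<in> topspace X then inverse (h x) else 0) \<le> inverse d" using x av_inv[OF av] by simp
  qed
  then show ?thesis by (rule C_intro[OF cont_inv[OF av C_cont[OF h] d hd]]) simp
qed

lemma C_ind: assumes U: "openin X U" "openin X (topspace X - U)"
  shows "(\<lambda>x. if x \<in> U then 1 else 0) \<in> carrier (Cbd X v)"
proof -
  have Ut: "U \<subseteq> topspace X" using U(1) by (rule openin_subset)
  have c: "cont X v (\<lambda>x. if x \<in> U then 1 else 0)"
  proof (rule cont_locconst[OF _ av])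
    fix x assume x: "x \<in> topspace X"
    show "\<exists>W. openin X W \<and> x \<in> W \<and> (\<forall>y\<in>W. (if y \<in> U then 1 else 0) = (if x \<in> U then 1 else (0::'k)))"
    proof (cases "x \<in> U")
      case True then show ?thesis using U(1) by (intro exI[of _ U]) simp
    next
      case False then show ?thesis using U(2) x by (intro exI[of _ "topspace X - U"]) simp
    qed
  qed
  have "\<forall>x\<in>topspace X. v (if x \<in> U then 1 else 0) \<le> 1" using av0[OF av] av1[OF av] by simp
  then show ?thesis by (rule C_intro[OF c]) (use Ut in auto)
qed

lemma cring_Cbd: "cring (Cbd X v)"
proof (rule cringI)
  show "abelian_group (Cbd X v)"
  proof (rule abelian_groupI)
    fix x y assume "x \<in> carrier (Cbd X v)" "y \<in> carrier (Cbd X v)"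
    then show "x \<oplus>\<^bsub>Cbd X v\<^esub> y \<in> carrier (Cbd X v)" using C_add by simp
  next
    show "\<zero>\<^bsub>Cbd X v\<^esub> \<in> carrier (Cbd X v)" using C_zero by simp
  next
    fix x y z show "x \<oplus>\<^bsub>Cbd X v\<^esub> y \<oplus>\<^bsub>Cbd X v\<^esub> z = x \<oplus>\<^bsub>Cbd X v\<^esub> (y \<oplus>\<^bsub>Cbd X v\<^esub> z)"
      by (simp add: add.assoc)
  next
    fix x y show "x \<oplus>\<^bsub>Cbd X v\<^esub> y = y \<oplus>\<^bsub>Cbd X v\<^esub> x" by (simp add: add.commute)
  next
    fix x show "\<zero>\<^bsub>Cbd X v\<^esub> \<oplus>\<^bsub>Cbd X v\<^esub> x = x" by simp
  next
    fix x assume x: "x \<in> carrier (Cbd X v)"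
    have "(\<lambda>y. - x y) \<in> carrier (Cbd X v) \<and> (\<lambda>y. - x y) \<oplus>\<^bsub>Cbd X v\<^esub> x = \<zero>\<^bsub>Cbd X v\<^esub>"
      using C_neg[OF x] by simp
    then show "\<exists>y\<in>carrier (Cbd X v). y \<oplus>\<^bsub>Cbd X v\<^esub> x = \<zero>\<^bsub>Cbd X v\<^esub>" by blast
  qed
next
  show "comm_monoid (Cbd X v)"
  proof (rule comm_monoidI)
    fix x y assume "x \<in> carrier (Cbd X v)" "y \<in> carrier (Cbd X v)"
    then show "x \<otimes>\<^bsub>Cbd X v\<^esub> y \<in> carrier (Cbd X v)" using C_mult by simp
  next
    show "\<one>\<^bsub>Cbd X v\<^esub> \<in> carrier (Cbd X v)" using C_cst by simp
  next
    fix x y z show "x \<otimes>\<^bsub>Cbd X v\<^esub> y \<otimes>\<^bsub>Cbd X v\<^esub> z = x \<otimes>\<^bsub>Cbd X v\<^esub> (y \<otimes>\<^bsub>Cbd X v\<^esub> z)"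
      by (simp add: mult.assoc)
  next
    fix x assume x: "x \<in> carrier (Cbd X v)"
    show "\<one>\<^bsub>Cbd X v\<^esub> \<otimes>\<^bsub>Cbd X v\<^esub> x = x"
      by (simp add: fun_eq_iff cst_def C_vanish[OF x])
  next
    fix x y show "x \<otimes>\<^bsub>Cbd X v\<^esub> y = y \<otimes>\<^bsub>Cbd X v\<^esub> x" by (simp add: mult.commute)
  qed
next
  fix x y z show "(x \<oplus>\<^bsub>Cbd X v\<^esub> y) \<otimes>\<^bsub>Cbd X v\<^esub> z = x \<otimes>\<^bsub>Cbd X v\<^esub> z \<oplus>\<^bsub>Cbd X v\<^esub> y \<otimes>\<^bsub>Cbd X v\<^esub> z"
    by (simp add: distrib_right)
qed

lemma Cbd_uminus: assumes f: "f \<in> carrier (Cbd X v)" shows "\<ominus>\<^bsub>Cbd X v\<^esub> f = (\<lambda>x. - f x)"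
proof -
  interpret cring "Cbd X v" by (rule cring_Cbd)
  show ?thesis by (rule minus_equality) (simp_all add: f C_neg)
qed

lemma Cbd_minus: assumes f: "f \<in> carrier (Cbd X v)" and g: "g \<in> carrier (Cbd X v)"
  shows "f \<ominus>\<^bsub>Cbd X v\<^esub> g = (\<lambda>x. f x - g x)"
  by (simp add: a_minus_def Cbd_uminus[OF g])

end


definition ind :: "'x set \<Rightarrow> 'x \<Rightarrow> 'k::field" where
  "ind U = (\<lambda>x. if x \<in> U then 1 else 0)"

definition clopen :: "'x topology \<Rightarrow> 'x set \<Rightarrow> bool" where
  "clopen X U \<longleftrightarrow> openin X U \<and> closedin X U"

locale mxl =
  fixes X :: "'x topology" and v :: "'k::field \<Rightarrow> real" and m :: "('x \<Rightarrow> 'k) set"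
  assumes av: "is_absval v" and na: "\<forall>x y. v (x + y) \<le> max (v x) (v y)"
    and mx: "maximalideal m (Cbd X v)"
begin

lemmas Cadd = C_add[OF av] and Cneg = C_neg[OF av] and Cmult = C_mult[OF av] and Ccst = C_cst[OF av]
  and Czero = C_zero[OF av] and Cinv = C_inv[OF av] and Cind0 = C_ind[OF av] and Cvan = C_vanish[OF av]
  and Cbnd = C_bnd[OF av] and Cminus = Cbd_minus[OF av] and Ccring = cring_Cbd[OF av]

lemma ideal_m: "ideal m (Cbd X v)" using mx by (simp add: maximalideal_def)

lemma m_sub: "f \<in> m \<Longrightarrow> f \<in> carrier (Cbd X v)"
proof -
  interpret ideal m "Cbd X v" by (rule ideal_m)
  show "f \<in> m \<Longrightarrow> f \<in> carrier (Cbd X v)" using a_subset by blast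
qed

lemma m_add: "f \<in> m \<Longrightarrow> g \<in> m \<Longrightarrow> (\<lambda>x. f x + g x) \<in> m"
proof -
  interpret ideal m "Cbd X v" by (rule ideal_m)
  show "f \<in> m \<Longrightarrow> g \<in> m \<Longrightarrow> (\<lambda>x. f x + g x) \<in> m" using additive_subgroup.a_closed[OF is_additive_subgroup, of f g] by simp
qed

lemma m_mult: "a \<in> m \<Longrightarrow> g \<in> carrier (Cbd X v) \<Longrightarrow> (\<lambda>x. g x * a x) \<in> m"
proof -
  interpret ideal m "Cbd X v" by (rule ideal_m)
  show "a \<in> m \<Longrightarrow> g \<in> carrier (Cbd X v) \<Longrightarrow> (\<lambda>x. g x * a x) \<in> m" using I_l_closed[of a g] by simp
qed

lemma m_zero: "(\<lambda>x. 0) \<in> m"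
proof -
  interpret ideal m "Cbd X v" by (rule ideal_m)
  show ?thesis using additive_subgroup.zero_closed[OF is_additive_subgroup] by simp
qed

lemma m_one: "cst X 1 \<notin> m"
proof
  assume "cst X 1 \<in> m"
  interpret maximalideal m "Cbd X v" by (rule mx)
  have "m = carrier (Cbd X v)" using one_imp_carrier \<open>cst X 1 \<in> m\<close> by simp
  then show False using I_notcarr by simp
qed

lemma m_prime: "a \<in> carrier (Cbd X v) \<Longrightarrow> b \<in> carrier (Cbd X v) \<Longrightarrow> (\<lambda>x. a x * b x) \<in> m \<Longrightarrow> a \<in> m \<or> b \<in> m"
proof -
  interpret cring "Cbd X v" by (rule Ccring)
  interpret primeideal m "Cbd X v" by (rule maximalideal_prime[OF mx])
  show "a \<in> carrier (Cbd X v) \<Longrightarrow> b \<in> carrier (Cbd X v) \<Longrightarrow> (\<lambda>x. a x * b x) \<in> m \<Longrightarrow> a \<in> m \<or> b \<in> m"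
    using I_prime[of a b] by simp
qed

lemma m_gen: assumes h: "h \<in> carrier (Cbd X v)" and hm: "h \<notin> m"
  shows "\<exists>g\<in>carrier (Cbd X v). \<exists>i\<in>m. cst X 1 = (\<lambda>x. g x * h x + i x)"
proof -
  interpret cring "Cbd X v" by (rule Ccring)
  interpret maximalideal m "Cbd X v" by (rule mx)
  let ?J = "m <+>\<^bsub>Cbd X v\<^esub> PIdl\<^bsub>Cbd X v\<^esub> h"
  have J: "ideal ?J (Cbd X v)" by (rule add_ideals[OF ideal_m cgenideal_ideal[OF h]])
  have "m \<subseteq> ?J"
  proof
    fix i assume i: "i \<in> m"
    have "\<zero>\<^bsub>Cbd X v\<^esub> \<otimes>\<^bsub>Cbd X v\<^esub> h \<in> PIdl\<^bsub>Cbd X v\<^esub> h" unfolding cgenideal_def by blast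
    moreover have "i = i \<oplus>\<^bsub>Cbd X v\<^esub> (\<zero>\<^bsub>Cbd X v\<^esub> \<otimes>\<^bsub>Cbd X v\<^esub> h)"
      using l_null[OF h] r_zero[OF m_sub[OF i]] by metis
    ultimately show "i \<in> ?J" using i unfolding set_add_def' by blast
  qed
  moreover have "h \<in> ?J"
  proof -
    have "\<one>\<^bsub>Cbd X v\<^esub> \<otimes>\<^bsub>Cbd X v\<^esub> h \<in> PIdl\<^bsub>Cbd X v\<^esub> h" unfolding cgenideal_def by blast
    moreover have "h = \<zero>\<^bsub>Cbd X v\<^esub> \<oplus>\<^bsub>Cbd X v\<^esub> (\<one>\<^bsub>Cbd X v\<^esub> \<otimes>\<^bsub>Cbd X v\<^esub> h)"
      using l_one[OF h] l_zero[OF h] by metis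
    moreover have "\<zero>\<^bsub>Cbd X v\<^esub> \<in> m" using m_zero by simp
    ultimately show "h \<in> ?J" unfolding set_add_def' by blast
  qed
  ultimately have "?J \<noteq> m" "m \<subseteq> ?J" using hm by auto
  moreover have "?J \<subseteq> carrier (Cbd X v)" using J ideal.axioms(1) additive_subgroup.a_subset by blast
  ultimately have "?J = carrier (Cbd X v)" using I_maximal[OF J] by blast
  then have "\<one>\<^bsub>Cbd X v\<^esub> \<in> ?J" using one_closed by simp
  then obtain i k where i: "i \<in> m" and k: "k \<in> PIdl\<^bsub>Cbd X v\<^esub> h" and e: "\<one>\<^bsub>Cbd X v\<^esub> = i \<oplus>\<^bsub>Cbd X v\<^esub> k"
    unfolding set_add_def' by blast
  obtain g where g: "g \<in> carrier (Cbd X v)" "k = g \<otimes>\<^bsub>Cbd X v\<^esub> h" using k unfolding cgenideal_def by blast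
  have "cst X 1 = (\<lambda>x. g x * h x + i x)" using e g by (simp add: add.commute)
  then show ?thesis using g i by blast
qed

lemma m_unit: assumes h: "h \<in> carrier (Cbd X v)" and d: "d > 0" and hd: "\<forall>x\<in>topspace X. d \<le> v (h x)"
  shows "h \<notin> m"
proof
  assume hm: "h \<in> m"
  let ?h' = "\<lambda>x. if x \<in> topspace X then inverse (h x) else 0"
  have h': "?h' \<in> carrier (Cbd X v)" by (rule Cinv[OF h d hd])
  have "(\<lambda>x. ?h' x * h x) = cst X 1"
  proof
    fix x show "?h' x * h x = cst X 1 x"
    proof (cases "x \<in> topspace X")
      case True
      then have "h x \<noteq> 0" using hd d av0[OF av] by force
      then show ?thesis using True by (simp add: cst_def)
    next
      case False then show ?thesis by (simp add: cst_def)
    qed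
  qed
  moreover have "(\<lambda>x. ?h' x * h x) \<in> m" by (rule m_mult[OF hm h'])
  ultimately show False using m_one by simp
qed

lemma top_ne: "topspace X \<noteq> {}"
proof
  assume "topspace X = {}"
  then have "cst X (1::'k) = (\<lambda>x. 0)" by (simp add: cst_def)
  then show False using m_one m_zero by metis
qed

end


lemma na_diff: fixes v :: "'k::field \<Rightarrow> real" assumes na: "\<forall>x y. v (x + y) \<le> max (v x) (v y)"
  shows "v (x - z) \<le> max (v (x - y)) (v (y - z))"
  using na[rule_format, of "x - y" "y - z"] by simp

definition Ub :: "'x topology \<Rightarrow> ('k::field \<Rightarrow> real) \<Rightarrow> ('x \<Rightarrow> 'k) \<Rightarrow> 'k \<Rightarrow> real \<Rightarrow> 'x set" where
  "Ub X v f b r = {x \<in> topspace X. v (f x - b) < r}"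

context mxl
begin

definition big :: "'x set \<Rightarrow> bool" where "big U \<longleftrightarrow> ind U \<notin> m"

lemma clopen_sub: "clopen X U \<Longrightarrow> U \<subseteq> topspace X"
  unfolding clopen_def using openin_subset by blast

lemma ind_C: assumes "clopen X U" shows "ind U \<in> carrier (Cbd X v)"
proof -
  have "openin X U" "openin X (topspace X - U)" using assms unfolding clopen_def closedin_def by auto
  then show ?thesis unfolding ind_def by (rule Cind0)
qed

lemma clopen_top: "clopen X (topspace X)" by (simp add: clopen_def)
lemma clopen_empty: "clopen X {}" by (simp add: clopen_def)
lemma clopen_Un: "clopen X A \<Longrightarrow> clopen X B \<Longrightarrow> clopen X (A \<union> B)"
  by (simp add: clopen_def openin_Un closedin_Un)
lemma clopen_Union: "finite F \<Longrightarrow> \<forall>A\<in>F. clopen X A \<Longrightarrow> clopen X (\<Union>F)"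
  by (induction F rule: finite_induct) (auto simp: clopen_empty clopen_Un)

lemma big_top: "big (topspace X)"
proof -
  have "ind (topspace X) = cst X (1::'k)" by (simp add: ind_def cst_def fun_eq_iff)
  then show ?thesis unfolding big_def using m_one by simp
qed

lemma not_big_empty: "\<not> big {}"
proof -
  have "ind ({}::'x set) = (\<lambda>x. 0::'k)" by (simp add: ind_def fun_eq_iff)
  then show ?thesis unfolding big_def using m_zero by simp
qed

lemma big_Un: assumes A: "clopen X A" and B: "clopen X B" and AB: "big (A \<union> B)"
  shows "big A \<or> big B"
proof (rule ccontr)
  assume "\<not> (big A \<or> big B)"
  then have Am: "ind A \<in> m" and Bm: "ind B \<in> m" unfolding big_def by auto
  have cA: "clopen X (topspace X - A)"
    using A unfolding clopen_def by (simp add: closedin_diff openin_diff)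
  have "(\<lambda>x. ind (topspace X - A) x * ind B x) \<in> m" by (rule m_mult[OF Bm ind_C[OF cA]])
  then have "(\<lambda>x. ind A x + ind (topspace X - A) x * ind B x) \<in> m" by (rule m_add[OF Am])
  moreover have "(\<lambda>x. ind A x + ind (topspace X - A) x * (ind B x::'k)) = ind (A \<union> B)"
    using clopen_sub[OF A] clopen_sub[OF B] by (auto simp: ind_def fun_eq_iff)
  ultimately show False using AB unfolding big_def by simp
qed

lemma big_mono: assumes A: "clopen X A" and B: "clopen X B" and AB: "A \<subseteq> B" and bA: "big A"
  shows "big B"
proof (rule ccontr)
  assume "\<not> big B"
  then have Bm: "ind B \<in> m" unfolding big_def by auto
  have "(\<lambda>x. ind A x * ind B x) \<in> m" by (rule m_mult[OF Bm ind_C[OF A]])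
  moreover have "(\<lambda>x. ind A x * (ind B x::'k)) = ind A" using AB by (auto simp: ind_def fun_eq_iff)
  ultimately show False using bA unfolding big_def by simp
qed

lemma big_meet: assumes A: "clopen X A" and B: "clopen X B" and bA: "big A" and bB: "big B"
  shows "A \<inter> B \<noteq> {}"
proof
  assume "A \<inter> B = {}"
  then have "(\<lambda>x. ind A x * (ind B x::'k)) = (\<lambda>x. 0)" by (auto simp: ind_def fun_eq_iff)
  then have "(\<lambda>x. ind A x * (ind B x::'k)) \<in> m" using m_zero by simp
  then have "ind A \<in> m \<or> ind B \<in> m" by (rule m_prime[OF ind_C[OF A] ind_C[OF B]])
  then show False using bA bB unfolding big_def by blast
qed

lemma big_finite: "finite F \<Longrightarrow> \<forall>A\<in>F. clopen X A \<Longrightarrow> big (\<Union>F) \<Longrightarrow> \<exists>A\<in>F. big A"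
proof (induction F rule: finite_induct)
  case empty then show ?case using not_big_empty by simp
next
  case (insert A F)
  have cA: "clopen X A" using insert.prems(1) by simp
  have cF: "clopen X (\<Union>F)" using insert.prems(1) insert.hyps(1) clopen_Union by simp
  have "big (A \<union> \<Union>F)" using insert.prems(2) by simp
  then have "big A \<or> big (\<Union>F)" by (rule big_Un[OF cA cF])
  then show ?case
  proof
    assume "big A" then show ?thesis by blast
  next
    assume "big (\<Union>F)"
    then have "\<exists>A\<in>F. big A" using insert.IH insert.prems(1) by blast
    then show ?thesis by blast
  qed
qed

lemma clopen_Ub: assumes f: "f \<in> carrier (Cbd X v)" and r: "r > 0"
  shows "clopen X (Ub X v f b r)"
proof -
  have c: "continuous_map X (absval_topology v) f" using C_cont[OF av f] cont_iff[OF av] by blast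
  have o1: "openin (absval_topology v) {y. v (y - b) < r}" unfolding openin_absval[OF av]
  proof
    fix y assume "y \<in> {y. v (y - b) < r}"
    then have y: "v (y - b) < r" by simp
    have "\<forall>z. v (z - y) < r - v (y - b) \<longrightarrow> z \<in> {y. v (y - b) < r}"
    proof (intro allI impI)
      fix z assume "v (z - y) < r - v (y - b)"
      then show "z \<in> {y. v (y - b) < r}" using av_diff_tri[OF av, of z b y] by simp
    qed
    then show "\<exists>e>0. \<forall>z. v (z - y) < e \<longrightarrow> z \<in> {y. v (y - b) < r}"
      using y by (intro exI[of _ "r - v (y - b)"]) simp
  qed
  have o2: "openin (absval_topology v) {y. r \<le> v (y - b)}" unfolding openin_absval[OF av]
  proof
    fix y assume "y \<in> {y. r \<le> v (y - b)}"
    then have y: "r \<le> v (y - b)" by simp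
    have "\<forall>z. v (z - y) < r \<longrightarrow> z \<in> {y. r \<le> v (y - b)}"
    proof (intro allI impI)
      fix z assume z: "v (z - y) < r"
      have "v (y - b) \<le> max (v (y - z)) (v (z - b))" by (rule na_diff[OF na])
      moreover have "v (y - z) < r" using z av_sym[OF av, of y z] by simp
      ultimately show "z \<in> {y. r \<le> v (y - b)}" using y by auto
    qed
    then show "\<exists>e>0. \<forall>z. v (z - y) < e \<longrightarrow> z \<in> {y. r \<le> v (y - b)}"
      using r by (intro exI[of _ r]) simp
  qed
  have "openin X {x \<in> topspace X. f x \<in> {y. v (y - b) < r}}" by (rule openin_continuous_map_preimage[OF c o1])
  then have U1: "openin X (Ub X v f b r)" by (simp add: Ub_def)
  have "openin X {x \<in> topspace X. f x \<in> {y. r \<le> v (y - b)}}" by (rule openin_continuous_map_preimage[OF c o2])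
  moreover have "{x \<in> topspace X. f x \<in> {y. r \<le> v (y - b)}} = topspace X - Ub X v f b r"
    by (auto simp: Ub_def)
  ultimately have "openin X (topspace X - Ub X v f b r)" by simp
  then have "closedin X (Ub X v f b r)" unfolding closedin_def Ub_def by auto
  then show ?thesis using U1 by (simp add: clopen_def)
qed

lemma L: assumes f: "f \<in> carrier (Cbd X v)" and hm: "(\<lambda>x. f x - cst X b x) \<notin> m"
  shows "\<exists>r>0. \<not> big (Ub X v f b r)"
proof -
  let ?h = "\<lambda>x. f x - cst X b x"
  have h: "?h \<in> carrier (Cbd X v)" using Cadd[OF f Cneg[OF Ccst]] by simp
  obtain g i where g: "g \<in> carrier (Cbd X v)" and i: "i \<in> m" and gi: "cst X 1 = (\<lambda>x. g x * ?h x + i x)"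
    using m_gen[OF h hm] by blast
  obtain M where M: "M > 0" "\<forall>x\<in>topspace X. v (g x) \<le> M" using Cbnd[OF g] by blast
  define r where "r = 1 / M"
  have r: "r > 0" using M by (simp add: r_def)
  let ?U = "Ub X v f b r"
  have cU: "clopen X ?U" by (rule clopen_Ub[OF f r])
  let ?e = "ind ?U :: 'x \<Rightarrow> 'k"
  have e: "?e \<in> carrier (Cbd X v)" by (rule ind_C[OF cU])
  let ?w = "\<lambda>x. cst X 1 x - ?e x * (g x * ?h x)"
  have w: "?w \<in> carrier (Cbd X v)"
    using Cadd[OF Ccst Cneg[OF Cmult[OF e Cmult[OF g h]]]] by simp
  have wd: "\<forall>x\<in>topspace X. 1 \<le> v (?w x)"
  proof
    fix x assume x: "x \<in> topspace X"
    show "1 \<le> v (?w x)"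
    proof (cases "x \<in> ?U")
      case True
      then have hx: "v (?h x) < r" using x by (simp add: Ub_def cst_def)
      have "v (g x * ?h x) = v (g x) * v (?h x)" by (rule av_mult[OF av])
      also have "\<dots> \<le> M * v (?h x)" using M x av_ge0[OF av] by (simp add: mult_right_mono)
      also have "\<dots> < M * r" using hx M by simp
      also have "\<dots> = 1" using M by (simp add: r_def)
      finally have gh: "v (g x * ?h x) < 1" .
      have "v (1::'k) \<le> max (v (?w x)) (v (g x * ?h x))"
        using na[rule_format, of "?w x" "g x * ?h x"] True x by (simp add: ind_def cst_def)
      then show ?thesis using gh av1[OF av] by auto
    next
      case False
      then show ?thesis using x av1[OF av] by (simp add: ind_def cst_def)
    qed
  qed
  have "(\<lambda>x. ?e x * i x) \<in> m" by (rule m_mult[OF i e])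
  moreover have "(\<lambda>x. ?e x * i x) = (\<lambda>x. ?e x * ?w x)"
  proof
    fix x
    have "i x = cst X 1 x - g x * ?h x" using fun_cong[OF gi, of x] by simp
    then show "?e x * i x = ?e x * ?w x" by (simp add: ind_def algebra_simps)
  qed
  ultimately have ew: "(\<lambda>x. ?e x * ?w x) \<in> m" by simp
  let ?w' = "\<lambda>x. if x \<in> topspace X then inverse (?w x) else 0"
  have w': "?w' \<in> carrier (Cbd X v)" by (rule Cinv[OF w _ wd]) simp
  have "(\<lambda>x. ?w' x * (?e x * ?w x)) \<in> m" by (rule m_mult[OF ew w'])
  moreover have "(\<lambda>x. ?w' x * (?e x * ?w x)) = ?e"
  proof
    fix x show "?w' x * (?e x * ?w x) = ?e x"
    proof (cases "x \<in> topspace X")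
      case True
      then have "?w x \<noteq> 0" using wd av0[OF av] by force
      then show ?thesis using True by simp
    next
      case False
      then show ?thesis by (simp add: ind_def Ub_def)
    qed
  qed
  ultimately have "?e \<in> m" by simp
  then show ?thesis using r unfolding big_def by blast
qed

end


context mxl
begin

lemma key:
  assumes TB: "\<forall>M r. r > 0 \<longrightarrow> (\<exists>F. finite F \<and> (\<forall>y. v y \<le> M \<longrightarrow> (\<exists>b\<in>F. v (y - b) < r)))"
    and CPL: "\<forall>s::nat \<Rightarrow> 'k. (\<forall>e>0. \<exists>N. \<forall>m\<ge>N. \<forall>n\<ge>N. v (s m - s n) < e)
           \<longrightarrow> (\<exists>l. \<forall>e>0. \<exists>N. \<forall>n\<ge>N. v (s n - l) < e)"
    and f: "f \<in> carrier (Cbd X v)"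
  shows "\<exists>a. (\<lambda>x. f x - cst X a x) \<in> m"
proof -
  obtain M where M: "\<forall>x\<in>topspace X. v (f x) \<le> M" using Cbnd[OF f] by blast
  have step1: "\<exists>c. big (Ub X v f c r)" if r: "r > 0" for r
  proof -
    obtain F where F: "finite F" "\<forall>y. v y \<le> M \<longrightarrow> (\<exists>b\<in>F. v (y - b) < r)" using TB r by blast
    let ?G = "(\<lambda>b. Ub X v f b r) ` F"
    have fG: "finite ?G" using F(1) by simp
    have cG: "\<forall>A\<in>?G. clopen X A" using clopen_Ub[OF f r] by blast
    have "\<Union>?G = topspace X"
    proof
      show "\<Union>?G \<subseteq> topspace X" by (auto simp: Ub_def)
      show "topspace X \<subseteq> \<Union>?G"
      proof
        fix x assume x: "x \<in> topspace X"
        then obtain b where "b \<in> F" "v (f x - b) < r" using F(2) M by blast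
        then show "x \<in> \<Union>?G" using x by (auto simp: Ub_def)
      qed
    qed
    then have "big (\<Union>?G)" using big_top by simp
    then obtain A where "A \<in> ?G" "big A" using big_finite[OF fG cG] by blast
    then show ?thesis by blast
  qed
  define rr :: "nat \<Rightarrow> real" where "rr n = inverse (real (Suc n))" for n
  have rr_pos: "rr n > 0" for n by (simp add: rr_def)
  have rr_mono: "n \<le> k \<Longrightarrow> rr k \<le> rr n" for n k by (simp add: rr_def le_imp_inverse_le)
  have rr_small: "\<exists>N. rr N < e" if "e > 0" for e
    using reals_Archimedean[OF that] by (auto simp: rr_def)
  define c where "c n = (SOME c. big (Ub X v f c (rr n)))" for n
  have cb: "big (Ub X v f (c n) (rr n))" for n
    unfolding c_def using step1[OF rr_pos[of n]] by (rule someI_ex)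
  have dist: "v (c n - c k) < max (rr n) (rr k)" for n k
  proof -
    have "Ub X v f (c n) (rr n) \<inter> Ub X v f (c k) (rr k) \<noteq> {}"
      by (rule big_meet[OF clopen_Ub[OF f rr_pos] clopen_Ub[OF f rr_pos] cb cb])
    then obtain x where x1: "v (f x - c n) < rr n" and x2: "v (f x - c k) < rr k" by (auto simp: Ub_def)
    have "v (c n - c k) \<le> max (v (c n - f x)) (v (f x - c k))" by (rule na_diff[OF na])
    moreover have "v (c n - f x) < rr n" using x1 av_sym[OF av, of "c n" "f x"] by simp
    ultimately show ?thesis using x2 by auto
  qed
  have "\<forall>e>0. \<exists>N. \<forall>n\<ge>N. \<forall>k\<ge>N. v (c n - c k) < e"
  proof (intro allI impI)
    fix e :: real assume e: "e > 0"
    obtain N where N: "rr N < e" using rr_small[OF e] by blast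
    have "\<forall>n\<ge>N. \<forall>k\<ge>N. v (c n - c k) < e"
    proof (intro allI impI)
      fix n k assume "n \<ge> N" "k \<ge> N"
      then have "rr n \<le> rr N" "rr k \<le> rr N" using rr_mono by auto
      then show "v (c n - c k) < e" using dist[of n k] N by auto
    qed
    then show "\<exists>N. \<forall>n\<ge>N. \<forall>k\<ge>N. v (c n - c k) < e" by blast
  qed
  then obtain a where a: "\<forall>e>0. \<exists>N. \<forall>n\<ge>N. v (c n - a) < e" using CPL by blast
  have big_a: "big (Ub X v f a r)" if r: "r > 0" for r
  proof -
    obtain N1 where N1: "\<forall>n\<ge>N1. v (c n - a) < r" using a r by blast
    obtain N2 where N2: "rr N2 < r" using rr_small[OF r] by blast
    define n where "n = max N1 N2"
    have n1: "v (c n - a) < r" using N1 by (simp add: n_def)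
    have n2: "rr n < r" using N2 rr_mono[of N2 n] by (simp add: n_def)
    have "Ub X v f (c n) (rr n) \<subseteq> Ub X v f a r"
    proof
      fix x assume "x \<in> Ub X v f (c n) (rr n)"
      then have x: "x \<in> topspace X" "v (f x - c n) < rr n" by (auto simp: Ub_def)
      have "v (f x - a) \<le> max (v (f x - c n)) (v (c n - a))" by (rule na_diff[OF na])
      then have "v (f x - a) < r" using x(2) n1 n2 by auto
      then show "x \<in> Ub X v f a r" using x(1) by (simp add: Ub_def)
    qed
    then show ?thesis by (rule big_mono[OF clopen_Ub[OF f rr_pos] clopen_Ub[OF f r] _ cb])
  qed
  show ?thesis
  proof (rule ccontr)
    assume "\<not> (\<exists>a. (\<lambda>x. f x - cst X a x) \<in> m)"
    then have "(\<lambda>x. f x - cst X a x) \<notin> m" by blast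
    then obtain r where "r > 0" "\<not> big (Ub X v f a r)" using L[OF f] by blast
    then show False using big_a by blast
  qed
qed

end


lemma triv_props:
  fixes v :: "'k::field \<Rightarrow> real"
  assumes fin: "finite (UNIV :: 'k set)" and tr: "trivial_absval v"
  shows "is_absval v" "\<forall>x y. v (x + y) \<le> max (v x) (v y)"
    "\<forall>M r. r > 0 \<longrightarrow> (\<exists>F. finite F \<and> (\<forall>y. v y \<le> M \<longrightarrow> (\<exists>b\<in>F. v (y - b) < r)))"
    "\<forall>s::nat \<Rightarrow> 'k. (\<forall>e>0. \<exists>N. \<forall>m\<ge>N. \<forall>n\<ge>N. v (s m - s n) < e)
           \<longrightarrow> (\<exists>l. \<forall>e>0. \<exists>N. \<forall>n\<ge>N. v (s n - l) < e)"
proof -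
  have vv: "v x = (if x = 0 then 0 else 1)" for x using tr unfolding trivial_absval_def by blast
  show "is_absval v" unfolding is_absval_def by (simp add: vv)
  show "\<forall>x y. v (x + y) \<le> max (v x) (v y)" by (simp add: vv)
  show "\<forall>M r. r > 0 \<longrightarrow> (\<exists>F. finite F \<and> (\<forall>y. v y \<le> M \<longrightarrow> (\<exists>b\<in>F. v (y - b) < r)))"
  proof (intro allI impI)
    fix M r :: real assume "r > 0"
    then have "\<forall>y. v y \<le> M \<longrightarrow> (\<exists>b\<in>UNIV. v (y - b) < r)" by (simp add: vv)
    then show "\<exists>F. finite F \<and> (\<forall>y. v y \<le> M \<longrightarrow> (\<exists>b\<in>F. v (y - b) < r))" using fin by blast
  qed
  show "\<forall>s::nat \<Rightarrow> 'k. (\<forall>e>0. \<exists>N. \<forall>m\<ge>N. \<forall>n\<ge>N. v (s m - s n) < e)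
           \<longrightarrow> (\<exists>l. \<forall>e>0. \<exists>N. \<forall>n\<ge>N. v (s n - l) < e)"
  proof (intro allI impI)
    fix s :: "nat \<Rightarrow> 'k" assume "\<forall>e>0. \<exists>N. \<forall>m\<ge>N. \<forall>n\<ge>N. v (s m - s n) < e"
    then obtain N where N: "\<forall>m\<ge>N. \<forall>n\<ge>N. v (s m - s n) < 1" by (meson zero_less_one)
    have "\<forall>n\<ge>N. s n = s N"
    proof (intro allI impI)
      fix n assume "n \<ge> N"
      then have "v (s n - s N) < 1" using N by blast
      then show "s n = s N" by (simp add: vv split: if_splits)
    qed
    then have sN: "\<forall>n\<ge>N. s n = s N" .
    have "\<forall>e>0. \<exists>N'. \<forall>n\<ge>N'. v (s n - s N) < e"
    proof (intro allI impI)
      fix e :: real assume e: "e > 0"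
      have "\<forall>n\<ge>N. v (s n - s N) < e"
      proof (intro allI impI)
        fix n assume "n \<ge> N"
        then have "s n = s N" using sN by blast
        then have "s n - s N = 0" by simp
        then show "v (s n - s N) < e" using e by (simp add: vv)
      qed
      then show "\<exists>N'. \<forall>n\<ge>N'. v (s n - s N) < e" by blast
    qed
    then show "\<exists>l. \<forall>e>0. \<exists>N. \<forall>n\<ge>N. v (s n - l) < e" by blast
  qed
qed

lemma powi_lt1:
  fixes \<rho> :: real assumes "0 < \<rho>" "\<rho> < 1" "\<rho> powi n < 1" shows "\<rho> powi n \<le> \<rho>"
proof (cases "n \<ge> 1")
  case True
  then have "\<rho> powi n = \<rho> ^ nat n" by (simp add: power_int_def)
  also have "\<dots> \<le> \<rho> ^ 1" using True assms by (intro power_decreasing) auto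
  finally show ?thesis by simp
next
  case False
  then have "\<rho> powi n = inverse \<rho> ^ nat (- n)" by (simp add: power_int_def)
  also have "\<dots> \<ge> 1" using assms by (intro one_le_power) (simp add: one_le_inverse)
  finally show ?thesis using assms by simp
qed

lemma local_props:
  fixes v :: "'k::field \<Rightarrow> real"
  assumes lf: "local_field v"
  shows "\<forall>M r. r > 0 \<longrightarrow> (\<exists>F. finite F \<and> (\<forall>y. v y \<le> M \<longrightarrow> (\<exists>b\<in>F. v (y - b) < r)))"
proof -
  note L = lf[unfolded local_field_def]
  have av: "is_absval v" by (rule L[THEN conjunct1])
  have "\<exists>\<pi>. 0 < v \<pi> \<and> v \<pi> < 1 \<and> (\<forall>x. x \<noteq> 0 \<longrightarrow> (\<exists>n::int. v x = v \<pi> powi n))"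
    by (rule L[THEN conjunct2, THEN conjunct2, THEN conjunct1])
  then obtain \<pi> where pi: "0 < v \<pi>" "v \<pi> < 1" "\<forall>x. x \<noteq> 0 \<longrightarrow> (\<exists>n::int. v x = v \<pi> powi n)"
    by blast
  define \<rho> where "\<rho> = v \<pi>"
  have rho: "0 < \<rho>" "\<rho> < 1" using pi by (auto simp: \<rho>_def)
  have pi0: "\<pi> \<noteq> 0" using pi(1) av0[OF av] by auto
  let ?O = "{x. v x \<le> 1}"
  let ?R = "{(x, y). v x \<le> 1 \<and> v y \<le> 1 \<and> v (x - y) < 1}"
  have finq: "finite (?O // ?R)" by (rule L[THEN conjunct2, THEN conjunct2, THEN conjunct2, THEN conjunct2])
  have disc: "v w \<le> \<rho>" if "v w < 1" for w
  proof (cases "w = 0")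
    case True then show ?thesis using av0[OF av] rho by simp
  next
    case False
    then obtain n :: int where "v w = \<rho> powi n" using pi(3) by (auto simp: \<rho>_def)
    then show ?thesis using powi_lt1[OF rho] that by simp
  qed
  define T where "T = (\<lambda>C. SOME t. t \<in> C) ` (?O // ?R)"
  have finT: "finite T" using finq by (simp add: T_def)
  have lem1: "\<exists>t\<in>T. v (z - t) \<le> \<rho>" if z: "v z \<le> 1" for z
  proof -
    have C: "?R `` {z} \<in> ?O // ?R" using z by (intro quotientI) simp
    have "z \<in> ?R `` {z}" using z av0[OF av] by simp
    define t where "t = (SOME t. t \<in> ?R `` {z})"
    have "t \<in> ?R `` {z}" unfolding t_def using \<open>z \<in> ?R `` {z}\<close> by (rule someI)
    then have "(z, t) \<in> ?R" by (rule Image_singleton_iff[THEN iffD1])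
    then have "v (z - t) < 1" by simp
    moreover have "t \<in> T" unfolding T_def t_def by (rule imageI[OF C])
    ultimately show ?thesis using disc by blast
  qed
  have lem2: "\<exists>F. finite F \<and> (\<forall>y. v y \<le> 1 \<longrightarrow> (\<exists>b\<in>F. v (y - b) \<le> \<rho> ^ n))" for n
  proof (induction n)
    case 0
    have "\<forall>y. v y \<le> 1 \<longrightarrow> (\<exists>b\<in>{0}. v (y - b) \<le> \<rho> ^ 0)" by simp
    then show ?case by blast
  next
    case (Suc n)
    then obtain F where F: "finite F" "\<forall>y. v y \<le> 1 \<longrightarrow> (\<exists>b\<in>F. v (y - b) \<le> \<rho> ^ n)" by blast
    let ?F = "(\<lambda>(b, t). b + \<pi> ^ n * t) ` (F \<times> T)"
    have "\<forall>y. v y \<le> 1 \<longrightarrow> (\<exists>b\<in>?F. v (y - b) \<le> \<rho> ^ Suc n)"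
    proof (intro allI impI)
      fix y assume y: "v y \<le> 1"
      then obtain b where b: "b \<in> F" "v (y - b) \<le> \<rho> ^ n" using F(2) by blast
      have pn: "\<pi> ^ n \<noteq> 0" using pi0 by simp
      have vpn: "v (\<pi> ^ n) = \<rho> ^ n" using av_pow[OF av] by (simp add: \<rho>_def)
      define z where "z = (y - b) / \<pi> ^ n"
      have "v z = v (y - b) / \<rho> ^ n"
        using av_mult[OF av] av_inv[OF av] vpn by (simp add: z_def divide_inverse)
      also have "\<dots> \<le> 1" using b(2) rho by (simp add: divide_le_eq)
      finally have "v z \<le> 1" .
      from lem1[OF this] obtain t where t: "t \<in> T" "v (z - t) \<le> \<rho>" by blast
      have zz: "\<pi> ^ n * z = y - b" using pn by (simp add: z_def)
      have "\<pi> ^ n * (z - t) = \<pi> ^ n * z - \<pi> ^ n * t" by (simp add: right_diff_distrib)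
      also have "\<dots> = y - (b + \<pi> ^ n * t)" unfolding zz by simp
      finally have "y - (b + \<pi> ^ n * t) = \<pi> ^ n * (z - t)" by simp
      then have "v (y - (b + \<pi> ^ n * t)) = \<rho> ^ n * v (z - t)" using av_mult[OF av] vpn by simp
      also have "\<dots> \<le> \<rho> ^ n * \<rho>" using t(2) rho by (simp add: mult_left_mono)
      finally have "v (y - (b + \<pi> ^ n * t)) \<le> \<rho> ^ Suc n" by (simp add: mult.commute)
      moreover have "b + \<pi> ^ n * t \<in> ?F" using b(1) t(1) by (intro image_eqI[where x="(b, t)"]) simp_all
      ultimately show "\<exists>b\<in>?F. v (y - b) \<le> \<rho> ^ Suc n" by blast
    qed
    moreover have "finite ?F" using F(1) finT by simp
    ultimately show ?case by blast
  qed
  show ?thesis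
  proof (intro allI impI)
    fix M r :: real assume r: "r > 0"
    have "1 < inverse \<rho>" using rho by (simp add: one_less_inverse)
    then obtain N where N: "M < inverse \<rho> ^ N" using real_arch_pow by blast
    have "r * \<rho> ^ N > 0" using r rho by simp
    then obtain n where n: "\<rho> ^ n < r * \<rho> ^ N" using real_arch_pow_inv rho(2) by blast
    obtain F where F: "finite F" "\<forall>y. v y \<le> 1 \<longrightarrow> (\<exists>b\<in>F. v (y - b) \<le> \<rho> ^ n)" using lem2 by blast
    let ?F = "(\<lambda>b. b / \<pi> ^ N) ` F"
    have pN: "\<pi> ^ N \<noteq> 0" using pi0 by simp
    have vpN: "v (\<pi> ^ N) = \<rho> ^ N" using av_pow[OF av] by (simp add: \<rho>_def)
    have rN: "\<rho> ^ N > 0" using rho by simp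
    have "\<forall>y. v y \<le> M \<longrightarrow> (\<exists>b\<in>?F. v (y - b) < r)"
    proof (intro allI impI)
      fix y assume y: "v y \<le> M"
      define z where "z = \<pi> ^ N * y"
      have "v z = \<rho> ^ N * v y" using av_mult[OF av] vpN by (simp add: z_def)
      also have "\<dots> \<le> \<rho> ^ N * M" using y rN by simp
      also have "\<dots> \<le> \<rho> ^ N * inverse \<rho> ^ N" using N rN by simp
      also have "\<dots> = 1" using rho by (simp add: power_inverse[symmetric] field_simps)
      finally have "v z \<le> 1" .
      then obtain b where b: "b \<in> F" "v (z - b) \<le> \<rho> ^ n" using F(2) by blast
      have "(z - b) / \<pi> ^ N = z / \<pi> ^ N - b / \<pi> ^ N" by (simp add: diff_divide_distrib)
      also have "z / \<pi> ^ N = y" using pN by (simp add: z_def)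
      finally have "y - b / \<pi> ^ N = (z - b) / \<pi> ^ N" by simp
      then have "v (y - b / \<pi> ^ N) = v (z - b) / \<rho> ^ N"
        using av_mult[OF av] av_inv[OF av] vpN by (simp add: divide_inverse)
      also have "\<dots> \<le> \<rho> ^ n / \<rho> ^ N" using b(2) rN by (simp add: divide_right_mono)
      also have "\<dots> < r" using n rN by (simp add: divide_less_eq)
      finally show "\<exists>b\<in>?F. v (y - b) < r" using b(1) by blast
    qed
    then show "\<exists>F. finite F \<and> (\<forall>y. v y \<le> M \<longrightarrow> (\<exists>b\<in>F. v (y - b) < r))" using F(1) by blast
  qed
qed


lemma sup_bdd: assumes av: "is_absval v" and f: "f \<in> carrier (Cbd X v)"
  shows "bdd_above ((\<lambda>x. v (f x)) ` topspace X)"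
proof -
  obtain B where "\<forall>x\<in>topspace X. v (f x) \<le> B" using C_bnd[OF av f] by blast
  then show ?thesis by (intro bdd_aboveI2) blast
qed

lemma sup_le: assumes "topspace X \<noteq> {}" "\<forall>x\<in>topspace X. v (h x) \<le> c"
  shows "sup_norm X v h \<le> c"
  unfolding sup_norm_def sup0_def using assms by (simp add: cSUP_least)

lemma le_sup: assumes av: "is_absval v" and f: "f \<in> carrier (Cbd X v)" and x: "x \<in> topspace X"
  shows "v (f x) \<le> sup_norm X v f"
proof -
  have "v (f x) \<le> (SUP x\<in>topspace X. v (f x))" by (rule cSUP_upper[OF x sup_bdd[OF av f]])
  then show ?thesis using x unfolding sup_norm_def sup0_def by auto
qed

locale mxl2 = mxl +
  assumes TB: "\<forall>M r. r > 0 \<longrightarrow> (\<exists>F. finite F \<and> (\<forall>y. v y \<le> M \<longrightarrow> (\<exists>b\<in>F. v (y - b) < r)))"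
    and CPL: "\<forall>s::nat \<Rightarrow> _. (\<forall>e>0. \<exists>N. \<forall>m\<ge>N. \<forall>n\<ge>N. v (s m - s n) < e)
           \<longrightarrow> (\<exists>l. \<forall>e>0. \<exists>N. \<forall>n\<ge>N. v (s n - l) < e)"
begin

lemma keyA: "f \<in> carrier (Cbd X v) \<Longrightarrow> \<exists>a. (\<lambda>x. f x - cst X a x) \<in> m"
  by (rule key[OF TB CPL])

lemma m_neg: assumes g: "g \<in> m" shows "(\<lambda>x. - g x) \<in> m"
proof -
  interpret ideal m "Cbd X v" by (rule ideal_m)
  have "\<ominus>\<^bsub>Cbd X v\<^esub> g \<in> m" by (rule additive_subgroup.a_inv_closed[OF is_additive_subgroup g])
  then show ?thesis using Cbd_uminus[OF av m_sub[OF g]] by simp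
qed

lemma m_diff: "f \<in> m \<Longrightarrow> g \<in> m \<Longrightarrow> (\<lambda>x. f x - g x) \<in> m"
  using m_add[OF _ m_neg, of f g] by simp

lemma cst_inj: assumes "(\<lambda>x. cst X a x - cst X b x) \<in> m" shows "a = b"
proof (rule ccontr)
  assume ab: "a \<noteq> b"
  have h: "(\<lambda>x. cst X a x - cst X b x) \<in> carrier (Cbd X v)" using Cadd[OF Ccst Cneg[OF Ccst]] by simp
  have d: "v (a - b) > 0" using ab av_ge0[OF av, of "a - b"] av_eq0[OF av, of "a - b"] by simp
  have "\<forall>x\<in>topspace X. v (a - b) \<le> v (cst X a x - cst X b x)" by (simp add: cst_def)
  then have "(\<lambda>x. cst X a x - cst X b x) \<notin> m" by (rule m_unit[OF h d])
  then show False using assms by simp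
qed

lemma coset_eq: assumes f: "f \<in> carrier (Cbd X v)" and g: "g \<in> carrier (Cbd X v)"
  shows "m +>\<^bsub>Cbd X v\<^esub> f = m +>\<^bsub>Cbd X v\<^esub> g \<longleftrightarrow> (\<lambda>x. f x - g x) \<in> m"
proof -
  interpret ideal m "Cbd X v" by (rule ideal_m)
  have r: "ring (Cbd X v)" using Ccring cring.axioms(1) by blast
  have iff: "(f \<in> m +>\<^bsub>Cbd X v\<^esub> g) = (f \<ominus>\<^bsub>Cbd X v\<^esub> g \<in> m)"
    by (rule a_rcos_module_minus[OF r g f])
  show ?thesis
  proof
    assume e: "m +>\<^bsub>Cbd X v\<^esub> f = m +>\<^bsub>Cbd X v\<^esub> g"
    have "f \<in> m +>\<^bsub>Cbd X v\<^esub> f" by (rule a_rcos_self[OF f])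
    then have "f \<in> m +>\<^bsub>Cbd X v\<^esub> g" using e by simp
    then show "(\<lambda>x. f x - g x) \<in> m" using iff Cminus[OF f g] by simp
  next
    assume "(\<lambda>x. f x - g x) \<in> m"
    then have "f \<in> m +>\<^bsub>Cbd X v\<^esub> g" using iff Cminus[OF f g] by simp
    then have "m +>\<^bsub>Cbd X v\<^esub> g = m +>\<^bsub>Cbd X v\<^esub> f" by (rule a_repr_independence'[OF _ g])
    then show "m +>\<^bsub>Cbd X v\<^esub> f = m +>\<^bsub>Cbd X v\<^esub> g" by simp
  qed
qed

lemma partA1: "bij_betw (\<lambda>a. m +>\<^bsub>Cbd X v\<^esub> cst X a) UNIV (carrier (Cbd X v Quot m))"
  unfolding bij_betw_def
proof
  show "inj_on (\<lambda>a. m +>\<^bsub>Cbd X v\<^esub> cst X a) UNIV"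
  proof (rule inj_onI)
    fix a b assume "m +>\<^bsub>Cbd X v\<^esub> cst X a = m +>\<^bsub>Cbd X v\<^esub> cst X b"
    then have "(\<lambda>x. cst X a x - cst X b x) \<in> m" using coset_eq[OF Ccst Ccst] by simp
    then show "a = b" by (rule cst_inj)
  qed
next
  interpret ideal m "Cbd X v" by (rule ideal_m)
  have car: "carrier (Cbd X v Quot m) = a_rcosets\<^bsub>Cbd X v\<^esub> m" by (simp add: FactRing_def)
  show "range (\<lambda>a. m +>\<^bsub>Cbd X v\<^esub> cst X a) = carrier (Cbd X v Quot m)"
  proof
    show "range (\<lambda>a. m +>\<^bsub>Cbd X v\<^esub> cst X a) \<subseteq> carrier (Cbd X v Quot m)"
      unfolding car using a_rcosetsI[OF a_subset Ccst] by blast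
  next
    show "carrier (Cbd X v Quot m) \<subseteq> range (\<lambda>a. m +>\<^bsub>Cbd X v\<^esub> cst X a)"
    proof
      fix C assume "C \<in> carrier (Cbd X v Quot m)"
      then obtain f where f: "f \<in> carrier (Cbd X v)" "C = m +>\<^bsub>Cbd X v\<^esub> f"
        unfolding car A_RCOSETS_def'[of "Cbd X v" m] by blast
      obtain a where "(\<lambda>x. f x - cst X a x) \<in> m" using keyA[OF f(1)] by blast
      then have "m +>\<^bsub>Cbd X v\<^esub> f = m +>\<^bsub>Cbd X v\<^esub> cst X a" using coset_eq[OF f(1) Ccst] by simp
      then show "C \<in> range (\<lambda>a. m +>\<^bsub>Cbd X v\<^esub> cst X a)" using f(2) by simp
    qed
  qed
qed

lemma partA2: assumes f: "f \<in> carrier (Cbd X v)"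
  shows "\<exists>!a. \<exists>g\<in>m. f = cst X a \<oplus>\<^bsub>Cbd X v\<^esub> g"
proof -
  obtain a where a: "(\<lambda>x. f x - cst X a x) \<in> m" using keyA[OF f] by blast
  have ex: "\<exists>g\<in>m. f = cst X a \<oplus>\<^bsub>Cbd X v\<^esub> g"
  proof
    show "f = cst X a \<oplus>\<^bsub>Cbd X v\<^esub> (\<lambda>x. f x - cst X a x)" by simp
  qed (rule a)
  have un: "b = a" if "\<exists>g\<in>m. f = cst X b \<oplus>\<^bsub>Cbd X v\<^esub> g" for b
  proof -
    from that obtain g where g0: "g \<in> m" "f = cst X b \<oplus>\<^bsub>Cbd X v\<^esub> g" by blast
    then have g: "g \<in> m" "f = (\<lambda>x. cst X b x + g x)" by simp_all
    have "(\<lambda>x. (f x - cst X a x) - g x) \<in> m" by (rule m_diff[OF a g(1)])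
    moreover have "(\<lambda>x. (f x - cst X a x) - g x) = (\<lambda>x. cst X b x - cst X a x)"
      by (subst g(2)) simp
    ultimately show "b = a" using cst_inj by simp
  qed
  show ?thesis using ex un by blast
qed

lemma partA3: assumes g: "g \<in> m"
  shows "sup_norm X v (cst X a \<oplus>\<^bsub>Cbd X v\<^esub> g) = max (v a) (sup_norm X v g)"
proof -
  have gc: "g \<in> carrier (Cbd X v)" by (rule m_sub[OF g])
  let ?h = "\<lambda>x. cst X a x + g x"
  have hc: "?h \<in> carrier (Cbd X v)" by (rule Cadd[OF Ccst gc])
  define T where "T = sup_norm X v ?h"
  define S where "S = sup_norm X v g"
  have ne: "topspace X \<noteq> {}" by (rule top_ne)
  have hx: "?h x = a + g x" if "x \<in> topspace X" for x using that by (simp add: cst_def)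
  have T1: "T \<le> max (v a) S" unfolding T_def
  proof (rule sup_le[OF ne], rule ballI)
    fix x assume x: "x \<in> topspace X"
    have "v (a + g x) \<le> max (v a) (v (g x))" using na by blast
    moreover have "v (g x) \<le> S" unfolding S_def by (rule le_sup[OF av gc x])
    ultimately show "v (?h x) \<le> max (v a) S" using hx[OF x] by auto
  qed
  have S1: "S \<le> max (v a) T" unfolding S_def
  proof (rule sup_le[OF ne], rule ballI)
    fix x assume x: "x \<in> topspace X"
    have "v ((a + g x) + (- a)) \<le> max (v (a + g x)) (v (- a))" using na by blast
    then have "v (g x) \<le> max (v (a + g x)) (v a)" using av_neg[OF av] by simp
    moreover have "v (?h x) \<le> T" unfolding T_def by (rule le_sup[OF av hc x])
    ultimately show "v (g x) \<le> max (v a) T" using hx[OF x] by auto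
  qed
  have A1: "v a \<le> T"
  proof (cases "a = 0")
    case True
    obtain x where x: "x \<in> topspace X" using ne by blast
    have "v (?h x) \<le> T" unfolding T_def by (rule le_sup[OF av hc x])
    then show ?thesis using True av0[OF av] av_ge0[OF av, of "?h x"] by simp
  next
    case False
    have d: "v a > 0" using False av_ge0[OF av, of a] av_eq0[OF av, of a] by simp
    have "\<not> (\<forall>x\<in>topspace X. v a \<le> v (g x))" using m_unit[OF gc d] g by blast
    then obtain x where x: "x \<in> topspace X" "v (g x) < v a" by force
    have "v ((a + g x) + (- g x)) \<le> max (v (a + g x)) (v (- g x))" using na by blast
    then have "v a \<le> max (v (a + g x)) (v (g x))" using av_neg[OF av] by simp
    then have "v a \<le> v (a + g x)" using x(2) by auto
    moreover have "v (?h x) \<le> T" unfolding T_def by (rule le_sup[OF av hc x(1)])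
    ultimately show ?thesis using hx[OF x(1)] by simp
  qed
  have "T = max (v a) S" using T1 S1 A1 by auto
  then show ?thesis unfolding T_def S_def by simp
qed

lemma eval_eq: assumes f: "f \<in> carrier (Cbd X v)" and a: "(\<lambda>x. f x - cst X a x) \<in> m"
  shows "eval_max X v m f = a"
  unfolding eval_max_def
proof (rule the_equality)
  have "(\<lambda>x. - (f x - cst X a x)) \<in> m" by (rule m_neg[OF a])
  then have "(\<lambda>x. cst X a x - f x) \<in> m" by simp
  then show "m +>\<^bsub>Cbd X v\<^esub> cst X a = m +>\<^bsub>Cbd X v\<^esub> f" using coset_eq[OF Ccst f] by simp
next
  fix b assume "m +>\<^bsub>Cbd X v\<^esub> cst X b = m +>\<^bsub>Cbd X v\<^esub> f"
  then have b: "(\<lambda>x. cst X b x - f x) \<in> m" using coset_eq[OF Ccst f] by simp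
  have "(\<lambda>x. (cst X b x - f x) + (f x - cst X a x)) \<in> m" by (rule m_add[OF b a])
  then have "(\<lambda>x. cst X b x - cst X a x) \<in> m" by simp
  then show "b = a" by (rule cst_inj)
qed

lemma eval_le: assumes f: "f \<in> carrier (Cbd X v)"
  shows "v (eval_max X v m f) \<le> sup_norm X v f"
proof -
  obtain a where a: "(\<lambda>x. f x - cst X a x) \<in> m" using keyA[OF f] by blast
  have e: "(\<lambda>x. cst X a x + (f x - cst X a x)) = f" by simp
  have "sup_norm X v (cst X a \<oplus>\<^bsub>Cbd X v\<^esub> (\<lambda>x. f x - cst X a x)) = max (v a) (sup_norm X v (\<lambda>x. f x - cst X a x))"
    by (rule partA3[OF a])
  then have "sup_norm X v f = max (v a) (sup_norm X v (\<lambda>x. f x - cst X a x))"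
    by (simp only: Cbd_add e)
  then show ?thesis using eval_eq[OF f a] by simp
qed

end


lemma pt_max: fixes X :: "'x topology" and v :: "'k::field \<Rightarrow> real" assumes av: "is_absval v" and x0: "x0 \<in> topspace X"
  shows "maximalideal {g \<in> carrier (Cbd X v). g x0 = 0} (Cbd X v)"
proof -
  interpret cring "Cbd X v" by (rule cring_Cbd[OF av])
  let ?I = "{g \<in> carrier (Cbd X v). g x0 = 0}"
  have sg: "subgroup ?I (add_monoid (Cbd X v))"
  proof (rule group.subgroupI[OF a_group])
    show "?I \<subseteq> carrier (add_monoid (Cbd X v))" by auto
    have "(\<lambda>x. 0) \<in> ?I" using C_zero[OF av] by simp
    then show "?I \<noteq> {}" by blast
  next
    fix a assume a: "a \<in> ?I"
    have "inv\<^bsub>add_monoid (Cbd X v)\<^esub> a = \<ominus>\<^bsub>Cbd X v\<^esub> a" by (simp add: a_inv_def)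
    also have "\<dots> = (\<lambda>x. - a x)" using a Cbd_uminus[OF av] by blast
    finally have ia: "inv\<^bsub>add_monoid (Cbd X v)\<^esub> a = (\<lambda>x. - a x)" .
    have ac: "a \<in> carrier (Cbd X v)" "a x0 = 0" using a by auto
    have "(\<lambda>x. - a x) \<in> carrier (Cbd X v)" by (rule C_neg[OF av ac(1)])
    then show "inv\<^bsub>add_monoid (Cbd X v)\<^esub> a \<in> ?I" using ia ac(2) by simp
  next
    fix a b assume a: "a \<in> ?I" and b: "b \<in> ?I"
    have ac: "a \<in> carrier (Cbd X v)" "a x0 = 0" using a by auto
    have bc: "b \<in> carrier (Cbd X v)" "b x0 = 0" using b by auto
    have "(\<lambda>x. a x + b x) \<in> carrier (Cbd X v)" by (rule C_add[OF av ac(1) bc(1)])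
    then show "a \<otimes>\<^bsub>add_monoid (Cbd X v)\<^esub> b \<in> ?I" using ac(2) bc(2) by simp
  qed
  have idl: "ideal ?I (Cbd X v)"
  proof (rule idealI[OF ring_axioms sg])
    fix a x assume a: "a \<in> ?I" and x: "x \<in> carrier (Cbd X v)"
    have ac: "a \<in> carrier (Cbd X v)" "a x0 = 0" using a by auto
    have "(\<lambda>y. x y * a y) \<in> carrier (Cbd X v)" by (rule C_mult[OF av x ac(1)])
    then show "x \<otimes>\<^bsub>Cbd X v\<^esub> a \<in> ?I" using ac(2) by simp
  next
    fix a x assume a: "a \<in> ?I" and x: "x \<in> carrier (Cbd X v)"
    have ac: "a \<in> carrier (Cbd X v)" "a x0 = 0" using a by auto
    have "(\<lambda>y. a y * x y) \<in> carrier (Cbd X v)" by (rule C_mult[OF av ac(1) x])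
    then show "a \<otimes>\<^bsub>Cbd X v\<^esub> x \<in> ?I" using ac(2) by simp
  qed
  show ?thesis
  proof (rule maximalidealI[OF idl])
    have c1: "cst X 1 \<in> carrier (Cbd X v)" by (rule C_cst[OF av])
    have c2: "cst X (1::'k) x0 = 1" using x0 by (simp add: cst_def)
    show "carrier (Cbd X v) \<noteq> ?I"
    proof
      assume "carrier (Cbd X v) = ?I"
      then have "cst X 1 \<in> ?I" using c1 by simp
      then have "cst X (1::'k) x0 = 0" by simp
      then show False using c2 by simp
    qed
  next
    fix J assume J: "ideal J (Cbd X v)" "?I \<subseteq> J" "J \<subseteq> carrier (Cbd X v)"
    show "J = ?I \<or> J = carrier (Cbd X v)"
    proof (cases "J = ?I")
      case True then show ?thesis by simp
    next
      case False
      then obtain h where h: "h \<in> J" "h \<notin> ?I" using J(2) by blast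
      have hc: "h \<in> carrier (Cbd X v)" using h J(3) by blast
      then have hx: "h x0 \<noteq> 0" using h by simp
      have "carrier (Cbd X v) \<subseteq> J"
      proof
        fix f assume f: "f \<in> carrier (Cbd X v)"
        define c where "c = f x0 / h x0"
        let ?q = "\<lambda>x. cst X c x * h x"
        have "cst X c \<otimes>\<^bsub>Cbd X v\<^esub> h \<in> J" by (rule ideal.I_l_closed[OF J(1) h(1) C_cst[OF av]])
        then have q: "?q \<in> J" by simp
        have qc: "?q \<in> carrier (Cbd X v)" using q J(3) by blast
        have rc: "(\<lambda>x. f x + - ?q x) \<in> carrier (Cbd X v)" by (rule C_add[OF av f C_neg[OF av qc]])
        have "f x0 + - ?q x0 = 0" using hx x0 by (simp add: c_def cst_def)
        then have "(\<lambda>x. f x + - ?q x) \<in> ?I" using rc by simp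
        then have r: "(\<lambda>x. f x + - ?q x) \<in> J" using J(2) by blast
        have "(\<lambda>x. f x + - ?q x) \<oplus>\<^bsub>Cbd X v\<^esub> ?q \<in> J"
          by (rule additive_subgroup.a_closed[OF ideal.axioms(1)[OF J(1)] r q])
        then show "f \<in> J" by simp
      qed
      then show ?thesis using J(3) by blast
    qed
  qed
qed

theorem mainTheorem12:
  fixes X :: "'x topology" and v :: "'k::field \<Rightarrow> real"
  assumes "(finite (UNIV :: 'k set) \<and> trivial_absval v) \<or> local_field v"
  shows "(\<forall>m. maximalideal m (Cbd X v) \<longrightarrow>
           bij_betw (\<lambda>a. m +>\<^bsub>Cbd X v\<^esub> cst X a) UNIV (carrier (Cbd X v Quot m))
         \<and> (\<forall>f\<in>carrier (Cbd X v). \<exists>!a. \<exists>g\<in>m. f = cst X a \<oplus>\<^bsub>Cbd X v\<^esub> g)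
         \<and> (\<forall>a g. g \<in> m \<longrightarrow>
              sup_norm X v (cst X a \<oplus>\<^bsub>Cbd X v\<^esub> g) = max (v a) (sup_norm X v g)))
       \<and> (\<forall>f\<in>carrier (Cbd X v). sup_norm X v f =
           sup0 ((\<lambda>m. v (eval_max X v m f)) ` {m. maximalideal m (Cbd X v)}))"
proof -
  have props: "is_absval v \<and> (\<forall>x y. v (x + y) \<le> max (v x) (v y))
    \<and> (\<forall>M r. r > 0 \<longrightarrow> (\<exists>F. finite F \<and> (\<forall>y. v y \<le> M \<longrightarrow> (\<exists>b\<in>F. v (y - b) < r))))
    \<and> (\<forall>s::nat \<Rightarrow> 'k. (\<forall>e>0. \<exists>N. \<forall>m\<ge>N. \<forall>n\<ge>N. v (s m - s n) < e)
           \<longrightarrow> (\<exists>l. \<forall>e>0. \<exists>N. \<forall>n\<ge>N. v (s n - l) < e))"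
    using assms
  proof
    assume "finite (UNIV :: 'k set) \<and> trivial_absval v"
    then show ?thesis using triv_props[of v] by blast
  next
    assume lf: "local_field v"
    note L = lf[unfolded local_field_def]
    have a1: "is_absval v" by (rule L[THEN conjunct1])
    have a2: "\<forall>x y. v (x + y) \<le> max (v x) (v y)" by (rule L[THEN conjunct2, THEN conjunct1])
    have a4: "\<forall>s::nat \<Rightarrow> 'k. (\<forall>e>0. \<exists>N. \<forall>m\<ge>N. \<forall>n\<ge>N. v (s m - s n) < e)
           \<longrightarrow> (\<exists>l. \<forall>e>0. \<exists>N. \<forall>n\<ge>N. v (s n - l) < e)"
      by (rule L[THEN conjunct2, THEN conjunct2, THEN conjunct2, THEN conjunct1])
    have a3: "\<forall>M r. r > 0 \<longrightarrow> (\<exists>F. finite F \<and> (\<forall>y. v y \<le> M \<longrightarrow> (\<exists>b\<in>F. v (y - b) < r)))"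
      by (rule local_props[OF lf])
    show ?thesis using a1 a2 a3 a4 by blast
  qed
  have av: "is_absval v" using props by blast
  have na: "\<forall>x y. v (x + y) \<le> max (v x) (v y)" using props by blast
  have TB: "\<forall>M r. r > 0 \<longrightarrow> (\<exists>F. finite F \<and> (\<forall>y. v y \<le> M \<longrightarrow> (\<exists>b\<in>F. v (y - b) < r)))"
    using props by blast
  have CPL: "\<forall>s::nat \<Rightarrow> 'k. (\<forall>e>0. \<exists>N. \<forall>m\<ge>N. \<forall>n\<ge>N. v (s m - s n) < e)
           \<longrightarrow> (\<exists>l. \<forall>e>0. \<exists>N. \<forall>n\<ge>N. v (s n - l) < e)"
    using props by blast
  have M2: "mxl2 X v m" if "maximalideal m (Cbd X v)" for m
    by (intro mxl2.intro mxl.intro mxl2_axioms.intro av na that TB CPL)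
  have part1: "\<forall>m. maximalideal m (Cbd X v) \<longrightarrow>
           bij_betw (\<lambda>a. m +>\<^bsub>Cbd X v\<^esub> cst X a) UNIV (carrier (Cbd X v Quot m))
         \<and> (\<forall>f\<in>carrier (Cbd X v). \<exists>!a. \<exists>g\<in>m. f = cst X a \<oplus>\<^bsub>Cbd X v\<^esub> g)
         \<and> (\<forall>a g. g \<in> m \<longrightarrow>
              sup_norm X v (cst X a \<oplus>\<^bsub>Cbd X v\<^esub> g) = max (v a) (sup_norm X v g))"
  proof (intro allI impI conjI ballI)
    fix m assume mx: "maximalideal m (Cbd X v)"
    interpret mxl2 X v m by (rule M2[OF mx])
    show "bij_betw (\<lambda>a. m +>\<^bsub>Cbd X v\<^esub> cst X a) UNIV (carrier (Cbd X v Quot m))" by (rule partA1)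
    fix f assume "f \<in> carrier (Cbd X v)"
    then show "\<exists>!a. \<exists>g\<in>m. f = cst X a \<oplus>\<^bsub>Cbd X v\<^esub> g" by (rule partA2)
  next
    fix m a g assume mx: "maximalideal m (Cbd X v)" and g: "g \<in> m"
    interpret mxl2 X v m by (rule M2[OF mx])
    show "sup_norm X v (cst X a \<oplus>\<^bsub>Cbd X v\<^esub> g) = max (v a) (sup_norm X v g)" by (rule partA3[OF g])
  qed
  have part2: "\<forall>f\<in>carrier (Cbd X v). sup_norm X v f =
           sup0 ((\<lambda>m. v (eval_max X v m f)) ` {m. maximalideal m (Cbd X v)})"
  proof
    fix f assume f: "f \<in> carrier (Cbd X v)"
    let ?E = "(\<lambda>m. v (eval_max X v m f)) ` {m. maximalideal m (Cbd X v)}"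
    show "sup_norm X v f = sup0 ?E"
    proof (cases "topspace X = {}")
      case True
      have "{m. maximalideal m (Cbd X v)} = {}"
      proof (rule ccontr)
        assume "{m. maximalideal m (Cbd X v)} \<noteq> {}"
        then obtain m where mx: "maximalideal m (Cbd X v)" by blast
        interpret mxl2 X v m by (rule M2[OF mx])
        show False using top_ne True by simp
      qed
      then show ?thesis using True by (simp add: sup_norm_def sup0_def)
    next
      case False
      then obtain x0 where x0: "x0 \<in> topspace X" by blast
      have Ebd: "\<forall>e\<in>?E. e \<le> sup_norm X v f"
      proof
        fix e assume "e \<in> ?E"
        then obtain m where mx: "maximalideal m (Cbd X v)" and e: "e = v (eval_max X v m f)" by blast
        interpret mxl2 X v m by (rule M2[OF mx])
        show "e \<le> sup_norm X v f" using eval_le[OF f] e by simp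
      qed
      have ptE: "v (f x) \<in> ?E" if x: "x \<in> topspace X" for x
      proof -
        let ?m = "{g \<in> carrier (Cbd X v). g x = 0}"
        have mx: "maximalideal ?m (Cbd X v)" by (rule pt_max[OF av x])
        interpret mxl2 X v ?m by (rule M2[OF mx])
        have "(\<lambda>y. f y - cst X (f x) y) \<in> carrier (Cbd X v)" using Cadd[OF f Cneg[OF Ccst]] by simp
        moreover have "f x - cst X (f x) x = 0" using x by (simp add: cst_def)
        ultimately have "(\<lambda>y. f y - cst X (f x) y) \<in> ?m" by simp
        then have "eval_max X v ?m f = f x" by (rule eval_eq[OF f])
        then show ?thesis using mx by force
      qed
      have Ene: "?E \<noteq> {}" using ptE[OF x0] by blast
      have Ebdd: "bdd_above ?E" using Ebd by (intro bdd_aboveI2) blast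
      have le1: "Sup ?E \<le> sup_norm X v f" using Ene Ebd by (intro cSup_least) auto
      have "(SUP x\<in>topspace X. v (f x)) \<le> Sup ?E"
      proof (rule cSUP_least[OF False])
        fix x assume "x \<in> topspace X"
        then show "v (f x) \<le> Sup ?E" using ptE Ebdd by (intro cSup_upper) auto
      qed
      then have le2: "sup_norm X v f \<le> Sup ?E" using False by (simp add: sup_norm_def sup0_def)
      have "sup0 ?E = Sup ?E" unfolding sup0_def using Ene by (rule if_not_P)
      then show ?thesis using le1 le2 by linarith
    qed
  qed
  show ?thesis using part1 part2 by blast
qed


end
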